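(* For $n\ge1$ and integers $i,j$ let $B_{n,i,j}=|\{w\in \mathrm{B}_n: \operatorname{des}(w)=i,\ \operatorname{des}(w^{-1})=j\}|$, with $B_{n,i,j}=0$ if $i<0$ or $j<0$ (and $B_{0,0,0}=1$). Then for all $n\ge 1$ and all $i,j$: $$nB_{n,i,j}=(n+i+j+2ij)B_{n-1,i,j}+(1-i+(2n+1)j-2ij)B_{n-1,i-1,j}+(1-j+(2n+1)i-2ij)B_{n-1,i,j-1}+\big(n(2n+3)-(2n+1)i-(2n+1)j+2ij\big)B_{n-1,i-1,j-1}.$$
   Context: $\mathrm{B}_n$ is the hyperoctahedral group (signed permutations) with its standard Coxeter generators $S$; $\operatorname{des}(w)=|\{s\in S: l_S(ws)<l_S(w)\}|$ with $l_S$ the word length. *)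

theory Defs
  imports "HOL-Combinatorics.Combinatorics"
begin

text \<open>The hyperoctahedral group B_n: signed permutations of {-n..n} (fixing 0),
  i.e. bijections w of the integers with w(-x) = -w(x) that fix everything outside
  {-n..n}.\<close>

definition signed_perms :: "nat \<Rightarrow> (int \<Rightarrow> int) set" where
  "signed_perms n = {w. w permutes {- int n .. int n} \<and> (\<forall>x. w (- x) = - w x)}"

definition gen0 :: "int \<Rightarrow> int" where
  "gen0 = transpose 1 (-1)"

definition gen :: "int \<Rightarrow> int \<Rightarrow> int" where
  "gen i = transpose i (i + 1) \<circ> transpose (- i) (- (i + 1))"

definition coxeter_gens :: "nat \<Rightarrow> (int \<Rightarrow> int) set" where
  "coxeter_gens n = (if n = 0 then {} else {gen0} \<union> {gen (int i) | i. 1 \<le> i \<and> i < n})"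

definition coxeter_length :: "nat \<Rightarrow> (int \<Rightarrow> int) \<Rightarrow> nat" where
  "coxeter_length n w =
     (LEAST k. \<exists>ws. length ws = k \<and> set ws \<subseteq> coxeter_gens n \<and> foldr (\<circ>) ws id = w)"

definition des :: "nat \<Rightarrow> (int \<Rightarrow> int) \<Rightarrow> nat" where
  "des n w = card {s \<in> coxeter_gens n. coxeter_length n (w \<circ> s) < coxeter_length n w}"

text \<open>B_{n,i,j}; automatically 0 for negative i or j.\<close>

definition Bnum :: "nat \<Rightarrow> int \<Rightarrow> int \<Rightarrow> int" where
  "Bnum n i j = int (card {w \<in> signed_perms n. int (des n w) = i \<and> int (des n (inv w)) = j})"

end

theory Submission
  imports Defs "HOL-Library.FuncSet"
begin

definition invs :: "int set \<Rightarrow> (int \<Rightarrow> int) \<Rightarrow> (int \<times> int) set" where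
  "invs S w = {(a,b). a \<in> S \<and> b \<in> S \<and> a < b \<and> w b < w a}"

lemma finite_invs: "finite S \<Longrightarrow> finite (invs S w)"
  unfolding invs_def by (rule finite_subset[of _ "S \<times> S"]) auto

lemma ninv_swap:
  fixes S :: "int set" and w :: "int \<Rightarrow> int"
  assumes fin: "finite S" and inj: "inj_on w S" and p: "p \<in> S" "p + 1 \<in> S"
  shows "int (card (invs S (w \<circ> transpose p (p+1)))) =
         int (card (invs S w)) + (if w p < w (p+1) then 1 else -1)"
proof -
  let ?t = "transpose p (p+1)"
  let ?tau = "\<lambda>(a,b). (?t a, ?t b)"
  let ?A = "invs S w" and ?B = "invs S (w \<circ> ?t)"
  have ne: "w p \<noteq> w (p+1)" using inj p by (metis inj_on_def less_irrefl lessI zless_add1_eq)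
  have tS: "x \<in> S \<Longrightarrow> ?t x \<in> S" for x using p by (auto simp: transpose_def)
  have ord: "a < b \<Longrightarrow> (a,b) \<noteq> (p,p+1) \<Longrightarrow> ?t a < ?t b" for a b
    by (auto simp: transpose_def)
  have img: "?B - {(p,p+1)} = ?tau ` (?A - {(p,p+1)})"
  proof (intro equalityI subsetI)
    fix x assume x: "x \<in> ?B - {(p,p+1)}"
    then obtain a b where ab: "x = (a,b)" by (cases x)
    have "(?t a, ?t b) \<in> ?A - {(p,p+1)}" using x ab ord[of a b] tS
      by (auto simp: invs_def transpose_def split: if_splits)
    moreover have "?tau (?t a, ?t b) = x" using ab by simp
    ultimately show "x \<in> ?tau ` (?A - {(p,p+1)})" by (metis (no_types, lifting) image_eqI)
  next
    fix x assume "x \<in> ?tau ` (?A - {(p,p+1)})"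
    then obtain a b where ab: "(a,b) \<in> ?A - {(p,p+1)}" "x = (?t a, ?t b)" by auto
    then show "x \<in> ?B - {(p,p+1)}" using ord[of a b] tS
      by (auto simp: invs_def transpose_def split: if_splits)
  qed
  have injt: "inj_on ?tau X" for X
    by (rule inj_onI) (auto simp: transpose_eq_iff)
  have c: "card (?B - {(p,p+1)}) = card (?A - {(p,p+1)})"
    using img injt card_image by metis
  have finA: "finite ?A" "finite ?B" using fin finite_invs by auto
  show ?thesis
  proof (cases "w p < w (p+1)")
    case True
    then have "(p,p+1) \<notin> ?A" "(p,p+1) \<in> ?B" using p by (auto simp: invs_def)
    moreover have "card ?B > 0" using calculation finA card_gt_0_iff by blast
    ultimately have "card ?B = Suc (card ?A)" using c finA card_Diff_singleton_if[of ?B "(p,p+1)"] card_Diff_singleton_if[of ?A "(p,p+1)"]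
      by (simp split: if_splits)
    then show ?thesis using True by simp
  next
    case False
    then have "(p,p+1) \<in> ?A" "(p,p+1) \<notin> ?B" using p ne by (auto simp: invs_def)
    moreover have "card ?A > 0" using calculation finA card_gt_0_iff by blast
    ultimately have "card ?A = Suc (card ?B)" using c finA card_Diff_singleton_if[of ?A "(p,p+1)"] card_Diff_singleton_if[of ?B "(p,p+1)"]
      Diff_insert0[of "(p,p+1)" ?B "{}"]
      by simp
    then show ?thesis using False by simp
  qed
qed

abbreviation SS :: "nat \<Rightarrow> int set" where "SS n \<equiv> {- int n .. int n}"

lemma SP_perm: "w \<in> signed_perms n \<Longrightarrow> w permutes SS n"
  by (simp add: signed_perms_def)
lemma SP_odd: "w \<in> signed_perms n \<Longrightarrow> w (- x) = - w x"
  by (simp add: signed_perms_def)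
lemma SP_zero: "w \<in> signed_perms n \<Longrightarrow> w 0 = 0"
  using SP_odd[of w n 0] by simp
lemma SP_in: assumes "w \<in> signed_perms n" "x \<in> SS n" shows "w x \<in> SS n"
  using permutes_in_image[OF SP_perm[OF assms(1)]] assms(2) by simp
lemma SP_out: assumes "w \<in> signed_perms n" "x \<notin> SS n" shows "w x = x"
  using permutes_not_in[OF SP_perm[OF assms(1)] assms(2)] .
lemma SP_inj: "w \<in> signed_perms n \<Longrightarrow> inj w"
  using SP_perm permutes_inj by blast
lemma SP_eq_iff: "w \<in> signed_perms n \<Longrightarrow> w x = w y \<longleftrightarrow> x = y"
  using SP_inj by (simp add: inj_eq)

lemma SP_comp: assumes "w \<in> signed_perms n" "v \<in> signed_perms n" shows "w \<circ> v \<in> signed_perms n"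
proof -
  have "w \<circ> v permutes SS n" using permutes_compose[OF SP_perm[OF assms(2)] SP_perm[OF assms(1)]] .
  moreover have "(w \<circ> v) (- x) = - (w \<circ> v) x" for x using SP_odd[OF assms(1)] SP_odd[OF assms(2)] by simp
  ultimately show ?thesis by (simp add: signed_perms_def)
qed

lemma SP_inv_app: "w \<in> signed_perms n \<Longrightarrow> w (inv w x) = x"
  using permutes_inverses(1)[OF SP_perm] by blast
lemma SP_app_inv: "w \<in> signed_perms n \<Longrightarrow> inv w (w x) = x"
  using permutes_inverses(2)[OF SP_perm] by blast

lemma SP_inv: assumes w: "w \<in> signed_perms n" shows "inv w \<in> signed_perms n"
proof -
  have p: "inv w permutes SS n" by (rule permutes_inv[OF SP_perm[OF w]])
  have "inv w (- x) = - inv w x" for x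
  proof -
    have "w (- inv w x) = - x" using SP_odd[OF w, of "inv w x"] SP_inv_app[OF w, of x] by simp
    then have "inv w (w (- inv w x)) = inv w (- x)" by simp
    then show ?thesis using SP_app_inv[OF w, of "- inv w x"] by simp
  qed
  with p show ?thesis by (simp add: signed_perms_def)
qed

lemma gen0_SP: assumes "1 \<le> n" shows "gen0 \<in> signed_perms n"
proof -
  have "gen0 permutes SS n" unfolding gen0_def using assms by (intro permutes_swap_id) auto
  moreover have "gen0 (- x) = - gen0 x" for x unfolding gen0_def by (simp add: transpose_def)
  ultimately show ?thesis by (simp add: signed_perms_def)
qed

lemma gen_SP: assumes "1 \<le> i" "i < int n" shows "gen i \<in> signed_perms n"
proof -
  have "gen i permutes SS n" unfolding gen_def using assms
    by (intro permutes_compose permutes_swap_id) auto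
  moreover have "gen i (- x) = - gen i x" for x unfolding gen_def using assms by (auto simp: transpose_def)
  ultimately show ?thesis by (simp add: signed_perms_def)
qed

definition Nn :: "nat \<Rightarrow> (int \<Rightarrow> int) \<Rightarrow> nat" where
  "Nn n w = card (invs (SS n) w)"
definition negc :: "nat \<Rightarrow> (int \<Rightarrow> int) \<Rightarrow> nat" where
  "negc n w = card {a \<in> {1..int n}. w a < 0}"
definition LL :: "nat \<Rightarrow> (int \<Rightarrow> int) \<Rightarrow> int" where
  "LL n w = int (Nn n w) - int (negc n w)"

lemma Nn_swap:
  assumes "inj w" "p \<in> SS n" "p + 1 \<in> SS n"
  shows "int (Nn n (w \<circ> transpose p (p+1))) = int (Nn n w) + (if w p < w (p+1) then 1 else -1)"
  unfolding Nn_def using ninv_swap[of "SS n" w p] assms inj_on_subset by blast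

lemma gen_decomp: "gen i = transpose i (i+1) \<circ> transpose (-i-1) (-i-1+1)"
  unfolding gen_def by (simp add: transpose_commute)

lemma gen0_decomp: "gen0 = transpose (-1) (-1+1) \<circ> transpose 0 (0+1) \<circ> transpose (-1) (-1+1)"
  unfolding gen0_def by (auto simp: transpose_def fun_eq_iff)


lemma Nn_gen:
  assumes w: "w \<in> signed_perms n" and i: "1 \<le> i" "i < int n"
  shows "int (Nn n (w \<circ> gen i)) = int (Nn n w) + (if w i < w (i+1) then 2 else -2)"
proof -
  let ?t1 = "transpose i (i+1)" and ?t2 = "transpose (-i-1) (-i-1+1)"
  have inj: "inj w" using SP_inj[OF w] .
  have inj1: "inj (w \<circ> ?t1)" using inj by (simp add: inj_compose)
  have e: "w \<circ> gen i = (w \<circ> ?t1) \<circ> ?t2" by (simp add: gen_decomp comp_assoc)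
  have s1: "int (Nn n (w \<circ> ?t1)) = int (Nn n w) + (if w i < w (i+1) then 1 else -1)"
    using Nn_swap[OF inj, of i n] i by simp
  have s2: "int (Nn n ((w \<circ> ?t1) \<circ> ?t2)) = int (Nn n (w \<circ> ?t1)) +
     (if (w \<circ> ?t1) (-i-1) < (w \<circ> ?t1) (-i-1+1) then 1 else -1)"
    using Nn_swap[OF inj1, of "-i-1" n] i by simp
  have v1: "(w \<circ> ?t1) (-i-1) = - w (i+1)" using i SP_odd[OF w, of "i+1"]
    by (simp add: transpose_def)
  have v2: "(w \<circ> ?t1) (-i-1+1) = - w i" using i SP_odd[OF w, of "i"]
    by (simp add: transpose_def)
  show ?thesis using e s1 s2 v1 v2 by auto
qed

lemma card_invol:
  assumes "\<And>x. s (s x) = x" "\<And>x. x \<in> P \<Longrightarrow> s x \<in> P"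
  shows "card {a \<in> P. v (s a) < (0::int)} = card {a \<in> P. v a < 0}"
proof -
  have "{a \<in> P. v (s a) < 0} = s ` {a \<in> P. v a < 0}"
  proof (intro equalityI subsetI)
    fix x assume "x \<in> {a \<in> P. v (s a) < 0}"
    then show "x \<in> s ` {a \<in> P. v a < 0}" using assms by (intro image_eqI[of _ _ "s x"]) auto
  next
    fix x assume "x \<in> s ` {a \<in> P. v a < 0}"
    then show "x \<in> {a \<in> P. v (s a) < 0}" using assms by auto
  qed
  moreover have "inj s" using assms(1) by (metis injI)
  ultimately show ?thesis by (simp add: card_image inj_on_subset)
qed

lemma negc_gen:
  assumes i: "1 \<le> i" "i < int n"
  shows "negc n (w \<circ> gen i) = negc n w"
proof -
  have a: "gen i (gen i x) = x" for x unfolding gen_def using i by (auto simp: transpose_def)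
  have b: "x \<in> {1..int n} \<Longrightarrow> gen i x \<in> {1..int n}" for x unfolding gen_def using i
    by (auto simp: transpose_def)
  show ?thesis unfolding negc_def using card_invol[OF a b, of w] by simp
qed

lemma negc_split:
  assumes "1 \<le> n"
  shows "negc n v = card {a \<in> {2..int n}. v a < 0} + (if v 1 < 0 then 1 else 0)"
proof -
  have i: "{1..int n} = insert 1 {2..int n}" using assms by auto
  have "{a \<in> {1..int n}. v a < 0} = {a \<in> {2..int n}. v a < 0} \<union> (if v 1 < 0 then {1} else {})"
    unfolding i by auto
  moreover have "finite {a \<in> {2..int n}. v a < 0}" by (rule finite_subset[of _ "{2..int n}"]) auto
  moreover have "1 \<notin> {a \<in> {2..int n}. v a < 0}" by simp
  ultimately show ?thesis unfolding negc_def
    by (cases "v 1 < 0") simp_all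
qed

lemma Nn_gen0:
  assumes w: "w \<in> signed_perms n" and n: "1 \<le> n"
  shows "int (Nn n (w \<circ> gen0)) = int (Nn n w) + (if 0 < w 1 then 3 else -3)"
proof -
  let ?t = "transpose (-1) (-1+1)" and ?u = "transpose 0 (0+1)"
  have inj: "inj w" using SP_inj[OF w] .
  have e: "w \<circ> gen0 = ((w \<circ> ?t) \<circ> ?u) \<circ> ?t" by (simp add: gen0_decomp comp_assoc)
  have a0: "w 0 = 0" using SP_zero[OF w] .
  have am: "w (-1) = - w 1" using SP_odd[OF w, of 1] by simp
  have nz: "w 1 \<noteq> 0" using SP_eq_iff[OF w, of 1 0] a0 by simp
  have inj1: "inj (w \<circ> ?t)" "inj ((w \<circ> ?t) \<circ> ?u)" using inj by (simp_all add: inj_compose)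
  have S: "(-1::int) \<in> SS n" "(-1+1::int) \<in> SS n" "(0::int) \<in> SS n" "(0+1::int) \<in> SS n" using n by auto
  have s1: "int (Nn n (w \<circ> ?t)) = int (Nn n w) + (if w (-1) < w (-1+1) then 1 else -1)"
    using Nn_swap[OF inj S(1,2)] .
  have s2: "int (Nn n ((w \<circ> ?t) \<circ> ?u)) = int (Nn n (w \<circ> ?t)) + (if (w \<circ> ?t) 0 < (w \<circ> ?t) (0+1) then 1 else -1)"
    using Nn_swap[OF inj1(1) S(3,4)] .
  have s3: "int (Nn n (((w \<circ> ?t) \<circ> ?u) \<circ> ?t)) = int (Nn n ((w \<circ> ?t) \<circ> ?u)) +
      (if ((w \<circ> ?t) \<circ> ?u) (-1) < ((w \<circ> ?t) \<circ> ?u) (-1+1) then 1 else -1)"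
    using Nn_swap[OF inj1(2) S(1,2)] .
  have v: "(w \<circ> ?t) 0 = - w 1" "(w \<circ> ?t) 1 = w 1" "((w \<circ> ?t) \<circ> ?u) (-1) = 0"
     "((w \<circ> ?t) \<circ> ?u) 0 = w 1" using a0 am by (simp_all add: transpose_def)

  have v0: "w (-1+1) = 0" "(w \<circ> ?t) (0+1) = w 1" "((w \<circ> ?t) \<circ> ?u) (-1+1) = w 1" using a0 v by simp_all
  show ?thesis unfolding e using s1 s2 s3 v v0 am nz by (cases "0 < w 1") simp_all
qed

lemma negc_gen0:
  assumes w: "w \<in> signed_perms n" and n: "1 \<le> n"
  shows "int (negc n (w \<circ> gen0)) = int (negc n w) + (if 0 < w 1 then 1 else -1)"
proof -
  have nz: "w 1 \<noteq> 0" using SP_eq_iff[OF w, of 1 0] SP_zero[OF w] by simp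
  have c: "{a \<in> {2..int n}. (w \<circ> gen0) a < 0} = {a \<in> {2..int n}. w a < 0}"
    by (auto simp: gen0_def transpose_def)
  have g: "(w \<circ> gen0) 1 = - w 1" using SP_odd[OF w, of 1] by (simp add: gen0_def)
  show ?thesis using negc_split[OF n, of w] negc_split[OF n, of "w \<circ> gen0"] c g nz by auto
qed

lemma LL_gen:
  assumes w: "w \<in> signed_perms n" and i: "1 \<le> i" "i < int n"
  shows "LL n (w \<circ> gen i) = LL n w + (if w i < w (i+1) then 2 else -2)"
  using Nn_gen[OF assms] negc_gen[OF i, of w] unfolding LL_def by simp

lemma LL_gen0:
  assumes w: "w \<in> signed_perms n" and n: "1 \<le> n"
  shows "LL n (w \<circ> gen0) = LL n w + (if 0 < w 1 then 2 else -2)"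
  using Nn_gen0[OF assms] negc_gen0[OF assms] unfolding LL_def by simp


lemma id_SP: "id \<in> signed_perms n"
  by (simp add: signed_perms_def)

lemma gens_cases:
  assumes "s \<in> coxeter_gens n"
  obtains "1 \<le> n" "s = gen0" | i where "1 \<le> i" "i < int n" "s = gen i"
proof -
  have "1 \<le> n \<and> (s = gen0 \<or> (\<exists>i::nat. 1 \<le> i \<and> i < n \<and> s = gen (int i)))"
    using assms unfolding coxeter_gens_def by (auto split: if_splits)
  then have A: "1 \<le> n" and B: "s = gen0 \<or> (\<exists>i::nat. 1 \<le> i \<and> i < n \<and> s = gen (int i))" by auto
  from B show ?thesis
  proof
    assume "s = gen0" then show ?thesis using that(1) A by simp
  next
    assume "\<exists>i::nat. 1 \<le> i \<and> i < n \<and> s = gen (int i)"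
    then obtain i :: nat where "1 \<le> i" "i < n" "s = gen (int i)" by blast
    then show ?thesis using that(2)[of "int i"] by simp
  qed
qed

lemma gens_SP: "s \<in> coxeter_gens n \<Longrightarrow> s \<in> signed_perms n"
  by (erule gens_cases) (auto intro: gen0_SP gen_SP)

lemma gen0_in: "1 \<le> n \<Longrightarrow> gen0 \<in> coxeter_gens n"
  by (simp add: coxeter_gens_def)
lemma gen_in: "1 \<le> i \<Longrightarrow> i < int n \<Longrightarrow> gen i \<in> coxeter_gens n"
  unfolding coxeter_gens_def by (auto intro!: exI[of _ "nat i"])

lemma gen0_invol: "gen0 \<circ> gen0 = id"
  unfolding gen0_def by (simp add: fun_eq_iff transpose_def)
lemma gen_invol: "1 \<le> i \<Longrightarrow> gen i \<circ> gen i = id"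
  unfolding gen_def by (auto simp: fun_eq_iff transpose_def)

lemma LL_step:
  assumes w: "w \<in> signed_perms n" and s: "s \<in> coxeter_gens n"
  shows "LL n (w \<circ> s) \<le> LL n w + 2"
  using s
proof (cases rule: gens_cases)
  case 1 then show ?thesis using LL_gen0[OF w] by simp
next
  case (2 i) then show ?thesis using LL_gen[OF w, of i] by simp
qed

lemma LL_id: "LL n id = 0"
proof -
  have "invs (SS n) id = {}" by (auto simp: invs_def)
  moreover have "{a \<in> {1..int n}. id a < 0} = {}" by auto
  ultimately show ?thesis unfolding LL_def Nn_def negc_def by (simp only: card.empty)
qed

lemma foldr_comp_id: "foldr (\<circ>) xs x = foldr (\<circ>) xs id \<circ> (x :: 'a \<Rightarrow> 'a)"
  by (induction xs) (simp_all add: fun_eq_iff)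

lemma foldr_snoc: "foldr (\<circ>) (xs @ [x]) id = foldr (\<circ>) xs id \<circ> (x :: 'a \<Rightarrow> 'a)"
  using foldr_comp_id[of xs x] by simp

definition prodw :: "(int \<Rightarrow> int) list \<Rightarrow> int \<Rightarrow> int" where
  "prodw ws = foldr (\<circ>) ws id"

lemma prodw_snoc: "prodw (xs @ [x]) = prodw xs \<circ> x"
  unfolding prodw_def by (rule foldr_snoc)

lemma word_bound:
  "set ws \<subseteq> coxeter_gens n \<Longrightarrow> prodw ws \<in> signed_perms n \<and> LL n (prodw ws) \<le> 2 * int (length ws)"
proof (induction ws rule: rev_induct)
  case Nil then show ?case using id_SP[of n] LL_id[of n] unfolding prodw_def id_def by simp
next
  case (snoc x xs)
  then have IH: "prodw xs \<in> signed_perms n" "LL n (prodw xs) \<le> 2 * int (length xs)"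
    and x: "x \<in> coxeter_gens n" by auto
  have "LL n (prodw xs \<circ> x) \<le> 2 * int (length (xs @ [x]))"
    using LL_step[OF IH(1) x] IH(2) by simp
  then show ?case unfolding prodw_snoc
    using SP_comp[OF IH(1) gens_SP[OF x]] by blast
qed

lemma incr_bound:
  fixes f :: "nat \<Rightarrow> int"
  assumes "\<And>i. i < m \<Longrightarrow> f i < f (Suc i)"
  shows "i \<le> j \<Longrightarrow> j \<le> m \<Longrightarrow> f j - f i \<ge> int (j - i)"
proof (induction j)
  case 0 then show ?case by simp
next
  case (Suc j)
  show ?case
  proof (cases "i \<le> j")
    case True
    then have "f j - f i \<ge> int (j - i)" using Suc by simp
    moreover have "f j < f (Suc j)" using assms Suc by simp
    ultimately show ?thesis using True by (simp add: Suc_diff_le)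
  next
    case False
    then have "i = Suc j" using Suc by simp
    then show ?thesis by simp
  qed
qed

lemma no_descent_id:
  assumes w: "w \<in> signed_perms n" and nd: "\<And>p. 0 \<le> p \<Longrightarrow> p < int n \<Longrightarrow> w p < w (p+1)"
  shows "w = id"
proof -
  let ?f = "\<lambda>k::nat. w (int k)"
  have inc: "?f i < ?f (Suc i)" if "i < n" for i
  proof -
    have "w (int i) < w (int i + 1)" using nd[of "int i"] that by simp
    then show ?thesis by (metis add.commute of_nat_Suc)
  qed
  have pos: "w (int k) = int k" if "k \<le> n" for k
  proof -
    have "?f k - ?f 0 \<ge> int k" using incr_bound[where f="?f" and m=n, OF inc, of 0 k] that by simp
    moreover have "?f n - ?f k \<ge> int (n - k)" using incr_bound[where f="?f" and m=n, OF inc, of k n] that by simp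
    moreover have "?f n \<le> int n" using SP_in[OF w, of "int n"] by simp
    ultimately show ?thesis using SP_zero[OF w] that by simp
  qed
  show ?thesis
  proof
    fix x
    show "w x = id x"
    proof (cases "x \<in> SS n")
      case False then show ?thesis using SP_out[OF w] by simp
    next
      case True
      show ?thesis
      proof (cases "x \<ge> 0")
        case True
        then show ?thesis using pos[of "nat x"] \<open>x \<in> SS n\<close> by simp
      next
        case False
        then have "w (- x) = - x" using pos[of "nat (- x)"] \<open>x \<in> SS n\<close> by simp
        then show ?thesis using SP_odd[OF w, of "- x"] by simp
      qed
    qed
  qed
qed

lemma exists_word:
  "w \<in> signed_perms n \<Longrightarrow> \<exists>ws. set ws \<subseteq> coxeter_gens n \<and> foldr (\<circ>) ws id = w \<and> 2 * int (length ws) = LL n w"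
proof (induction "Nn n w" arbitrary: w rule: less_induct)
  case less
  note w = less.prems
  show ?case
  proof (cases "w = id")
    case True
    then show ?thesis by (intro exI[of _ "[]"]) (simp add: LL_id)
  next
    case False
    then obtain p where p: "0 \<le> p" "p < int n" "\<not> w p < w (p+1)"
      using no_descent_id[OF w] by blast
    then have d: "w (p+1) < w p" using SP_eq_iff[OF w, of p "p+1"] by auto
    show ?thesis
    proof (cases "p = 0")
      case True
      have n: "1 \<le> n" using p by simp
      have w1: "\<not> 0 < w 1" using d True SP_zero[OF w] by simp
      have sp: "w \<circ> gen0 \<in> signed_perms n" using SP_comp[OF w gen0_SP[OF n]] .
      have "int (Nn n (w \<circ> gen0)) < int (Nn n w)" using Nn_gen0[OF w n] w1 by simp
      then obtain ws where ws: "set ws \<subseteq> coxeter_gens n" "foldr (\<circ>) ws id = w \<circ> gen0"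
        "2 * int (length ws) = LL n (w \<circ> gen0)" using less.hyps[OF _ sp] by auto
      have "foldr (\<circ>) (ws @ [gen0]) id = w" unfolding foldr_snoc ws(2)
        by (simp add: comp_assoc gen0_invol)
      moreover have "2 * int (length (ws @ [gen0])) = LL n w" using ws(3) LL_gen0[OF w n] w1 by simp
      ultimately show ?thesis using ws(1) gen0_in[OF n] by (intro exI[of _ "ws @ [gen0]"]) auto
    next
      case False
      then have i: "1 \<le> p" "p < int n" using p by auto
      have w1: "\<not> w p < w (p+1)" using d by simp
      have sp: "w \<circ> gen p \<in> signed_perms n" using SP_comp[OF w gen_SP[OF i]] .
      have "int (Nn n (w \<circ> gen p)) < int (Nn n w)" using Nn_gen[OF w i] w1 by simp
      then obtain ws where ws: "set ws \<subseteq> coxeter_gens n" "foldr (\<circ>) ws id = w \<circ> gen p"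
        "2 * int (length ws) = LL n (w \<circ> gen p)" using less.hyps[OF _ sp] by auto
      have "foldr (\<circ>) (ws @ [gen p]) id = w" unfolding foldr_snoc ws(2)
        by (simp add: comp_assoc gen_invol[OF i(1)])
      moreover have "2 * int (length (ws @ [gen p])) = LL n w" using ws(3) LL_gen[OF w i] w1 by simp
      ultimately show ?thesis using ws(1) gen_in[OF i] by (intro exI[of _ "ws @ [gen p]"]) auto
    qed
  qed
qed

lemma coxeter_length_LL:
  assumes w: "w \<in> signed_perms n"
  shows "2 * int (coxeter_length n w) = LL n w"
proof -
  obtain ws where ws: "set ws \<subseteq> coxeter_gens n" "foldr (\<circ>) ws id = w" "2 * int (length ws) = LL n w"
    using exists_word[OF w] by blast
  have "coxeter_length n w = length ws"
    unfolding coxeter_length_def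
  proof (rule Least_equality)
    show "\<exists>vs. length vs = length ws \<and> set vs \<subseteq> coxeter_gens n \<and> foldr (\<circ>) vs id = w"
      using ws by blast
  next
    fix k assume "\<exists>vs. length vs = k \<and> set vs \<subseteq> coxeter_gens n \<and> foldr (\<circ>) vs id = w"
    then obtain vs where "length vs = k" "set vs \<subseteq> coxeter_gens n" "foldr (\<circ>) vs id = w" by blast
    then show "length ws \<le> k" using word_bound[of vs n] ws(3) unfolding prodw_def by simp
  qed
  then show ?thesis using ws(3) by simp
qed


definition dset :: "nat \<Rightarrow> (int \<Rightarrow> int) \<Rightarrow> int set" where
  "dset n w = {p \<in> {0..<int n}. w (p+1) < w p}"

lemma gen_at: "1 \<le> p \<Longrightarrow> gen p p = p + 1"
  unfolding gen_def by (simp add: transpose_def)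

lemma gen_pos: assumes "1 \<le> p" "1 \<le> q" shows "gen q p = transpose q (q+1) p"
proof -
  have "transpose (-q) (-(q+1)) p = p" using assms by (simp add: transpose_def)
  then show ?thesis by (simp add: gen_def)
qed

lemma gen_at_other: assumes "1 \<le> p" "1 \<le> q" "gen q p = p + 1" shows "q = p"
proof -
  have "transpose q (q+1) p = p + 1" using gen_pos[OF assms(1,2)] assms(3) by simp
  then show ?thesis by (cases "p = q"; cases "p = q + 1") (simp_all add: transpose_def)
qed

lemma gen_ne_gen0: assumes "1 \<le> p" shows "gen p \<noteq> gen0"
proof
  assume "gen p = gen0"
  then have "gen p 1 = -1" by (simp add: gen0_def)
  moreover have "gen p 1 = transpose p (p+1) 1" using gen_pos[of 1 p] assms by simp
  ultimately show False using assms by (cases "p = 1") (simp_all add: transpose_def)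
qed

lemma des_char:
  assumes w: "w \<in> signed_perms n"
  shows "des n w = card (dset n w)"
proof -
  define phi where "phi p = (if p = 0 then gen0 else gen p)" for p :: int
  have cl: "coxeter_length n (w \<circ> s) < coxeter_length n w \<longleftrightarrow> LL n (w \<circ> s) < LL n w"
    if "s \<in> coxeter_gens n" for s
    using coxeter_length_LL[OF w] coxeter_length_LL[OF SP_comp[OF w gens_SP[OF that]]] by linarith
  have nz: "w 1 \<noteq> 0" using SP_eq_iff[OF w, of 1 0] SP_zero[OF w] by simp
  have eq: "{s \<in> coxeter_gens n. coxeter_length n (w \<circ> s) < coxeter_length n w} = phi ` dset n w"
  proof (intro equalityI subsetI)
    fix s assume s: "s \<in> {s \<in> coxeter_gens n. coxeter_length n (w \<circ> s) < coxeter_length n w}"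
    then have sg: "s \<in> coxeter_gens n" and lt: "LL n (w \<circ> s) < LL n w" using cl by auto
    from sg show "s \<in> phi ` dset n w"
    proof (cases rule: gens_cases)
      case 1
      then have "w 1 < 0" using LL_gen0[OF w] lt nz by (auto split: if_splits)
      then have "0 \<in> dset n w" using 1 SP_zero[OF w] by (simp add: dset_def)
      then show ?thesis using 1 by (intro image_eqI[of _ _ 0]) (simp_all add: phi_def)
    next
      case (2 i)
      then have "w (i+1) < w i" using LL_gen[OF w, of i] lt SP_eq_iff[OF w, of i "i+1"] by (auto split: if_splits)
      then have "i \<in> dset n w" using 2 by (simp add: dset_def)
      then show ?thesis using 2 by (intro image_eqI[of _ _ i]) (simp_all add: phi_def)
    qed
  next
    fix s assume "s \<in> phi ` dset n w"
    then obtain p where p: "p \<in> dset n w" "s = phi p" by blast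
    then have p2: "0 \<le> p" "p < int n" "w (p+1) < w p" by (auto simp: dset_def)
    show "s \<in> {s \<in> coxeter_gens n. coxeter_length n (w \<circ> s) < coxeter_length n w}"
    proof (cases "p = 0")
      case True
      then have n: "1 \<le> n" and s0: "s = gen0" using p2 p by (auto simp: phi_def)
      have "LL n (w \<circ> gen0) < LL n w" using LL_gen0[OF w n] p2 True SP_zero[OF w] by simp
      then show ?thesis using s0 gen0_in[OF n] cl by auto
    next
      case False
      then have i: "1 \<le> p" "p < int n" and s0: "s = gen p" using p2 p by (auto simp: phi_def)
      have "LL n (w \<circ> gen p) < LL n w" using LL_gen[OF w i] p2 by simp
      then show ?thesis using s0 gen_in[OF i] cl by auto
    qed
  qed
  have inj: "inj_on phi (dset n w)"
  proof (rule inj_onI)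
    fix p q assume pq: "p \<in> dset n w" "q \<in> dset n w" "phi p = phi q"
    then have "0 \<le> p" "0 \<le> q" by (auto simp: dset_def)
    show "p = q"
    proof (cases "p = 0"; cases "q = 0")
      assume "p = 0" "q \<noteq> 0" then show ?thesis using pq \<open>0 \<le> q\<close> gen_ne_gen0[of q] by (simp add: phi_def)
    next
      assume "p \<noteq> 0" "q = 0" then show ?thesis using pq \<open>0 \<le> p\<close> gen_ne_gen0[of p] by (simp add: phi_def)
    next
      assume "p \<noteq> 0" "q \<noteq> 0"
      then have "gen p = gen q" "1 \<le> p" "1 \<le> q" using pq \<open>0 \<le> p\<close> \<open>0 \<le> q\<close> by (simp_all add: phi_def)
      then show ?thesis using gen_at[of p] gen_at_other[of p q] by simp
    qed simp
  qed
  show ?thesis unfolding des_def eq using card_image[OF inj] .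
qed

lemma des_le: "w \<in> signed_perms n \<Longrightarrow> des n w \<le> n"
proof -
  assume w: "w \<in> signed_perms n"
  have "card (dset n w) \<le> card {0..<int n}" by (rule card_mono) (auto simp: dset_def)
  then show ?thesis using des_char[OF w] by simp
qed


definition comp :: "nat \<Rightarrow> int \<Rightarrow> int set \<Rightarrow> (int \<Rightarrow> int) set" where
  "comp n k D = {f. (\<forall>x. x \<notin> {1..int n} \<longrightarrow> f x = 0) \<and>
      (\<forall>p \<in> {0..<int n}. f p \<le> f (p+1) \<and> (p \<in> D \<longrightarrow> f p < f (p+1))) \<and> f (int n) \<le> k}"

lemma chain_mono_aux:
  fixes f :: "int \<Rightarrow> int"
  assumes "\<And>p. 0 \<le> p \<Longrightarrow> p < int n \<Longrightarrow> f p \<le> f (p+1)" "0 \<le> p"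
  shows "p + int d \<le> int n \<Longrightarrow> f p \<le> f (p + int d)"
proof (induction d)
  case 0 then show ?case by simp
next
  case (Suc d)
  then have "f p \<le> f (p + int d)" by simp
  also have "f (p + int d) \<le> f (p + int d + 1)" using assms Suc.prems by simp
  finally have le: "f p \<le> f (p + int d + 1)" .
  have eq: "p + int (Suc d) = p + int d + 1" by simp
  show ?case unfolding eq by (rule le)
qed

lemma chain_mono:
  fixes f :: "int \<Rightarrow> int"
  assumes "\<And>p. 0 \<le> p \<Longrightarrow> p < int n \<Longrightarrow> f p \<le> f (p+1)"
  shows "0 \<le> p \<Longrightarrow> p \<le> q \<Longrightarrow> q \<le> int n \<Longrightarrow> f p \<le> f q"
  using chain_mono_aux[where f=f and n=n and p=p and d="nat (q-p)", OF assms] by simp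

lemma comp_mono: "f \<in> comp n k D \<Longrightarrow> 0 \<le> p \<Longrightarrow> p < int n \<Longrightarrow> f p \<le> f (p+1)"
  unfolding comp_def by auto

lemma comp_le: "f \<in> comp n k D \<Longrightarrow> 0 \<le> p \<Longrightarrow> p \<le> q \<Longrightarrow> q \<le> int n \<Longrightarrow> f p \<le> f q"
  by (rule chain_mono[where f=f and n=n]) (auto intro: comp_mono)

lemma comp_zero: "f \<in> comp n k D \<Longrightarrow> x \<notin> {1..int n} \<Longrightarrow> f x = 0"
  unfolding comp_def by auto

lemma comp_nonneg: "f \<in> comp n k D \<Longrightarrow> 0 \<le> f p"
proof -
  assume f: "f \<in> comp n k D"
  show ?thesis
  proof (cases "p \<in> {1..int n}")
    case True
    have "f 0 \<le> f p" using comp_le[OF f, of 0 p] True by simp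
    moreover have "f 0 = 0" using comp_zero[OF f, of 0] by simp
    ultimately show ?thesis by simp
  next
    case False then show ?thesis using f by (auto simp: comp_def)
  qed
qed

lemma comp0: "comp 0 m {} = (if 0 \<le> m then {\<lambda>_. 0} else {})"
  unfolding comp_def by (auto simp: fun_eq_iff)

lemma comp_Suc_bij:
  "bij_betw (\<lambda>f. (f (int n + 1), f(int n + 1 := 0))) (comp (Suc n) m {})
     (Sigma {0..m} (\<lambda>t. comp n t {}))"
proof (rule bij_betw_byWitness[where f' = "\<lambda>(t,g). g(int n + 1 := t)"])
  show "\<forall>f \<in> comp (Suc n) m {}. (\<lambda>(t,g). g(int n + 1 := t)) (f (int n + 1), f(int n + 1 := 0)) = f"
    by auto
  show "\<forall>x \<in> Sigma {0..m} (\<lambda>t. comp n t {}). (\<lambda>f. (f (int n + 1), f(int n + 1 := 0))) ((\<lambda>(t,g). g(int n + 1 := t)) x) = x"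
    by (auto simp: comp_def fun_eq_iff)
  show "(\<lambda>f. (f (int n + 1), f(int n + 1 := 0))) ` comp (Suc n) m {} \<subseteq> Sigma {0..m} (\<lambda>t. comp n t {})"
  proof
    fix y assume "y \<in> (\<lambda>f. (f (int n + 1), f(int n + 1 := 0))) ` comp (Suc n) m {}"
    then obtain f where f: "f \<in> comp (Suc n) m {}" and y: "y = (f (int n + 1), f(int n + 1 := 0))" by blast
    have "0 \<le> f (int n + 1)" using comp_nonneg[OF f] .
    moreover have "f (int n + 1) \<le> m" using f by (auto simp: comp_def add.commute)
    moreover have "f(int n + 1 := 0) \<in> comp n (f (int n + 1)) {}"
      using f unfolding comp_def by auto
    ultimately show "y \<in> Sigma {0..m} (\<lambda>t. comp n t {})" using y by simp
  qed
  show "(\<lambda>(t,g). g(int n + 1 := t)) ` Sigma {0..m} (\<lambda>t. comp n t {}) \<subseteq> comp (Suc n) m {}"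
  proof
    fix y assume "y \<in> (\<lambda>(t,g). g(int n + 1 := t)) ` Sigma {0..m} (\<lambda>t. comp n t {})"
    then obtain x where x: "x \<in> Sigma {0..m} (\<lambda>t. comp n t {})" "y = (\<lambda>(t,g). g(int n + 1 := t)) x" by blast
    obtain t g where xtg: "x = (t,g)" by (cases x)
    have tg: "t \<in> {0..m}" "g \<in> comp n t {}" and y: "y = g(int n + 1 := t)" using x xtg by auto
    show "y \<in> comp (Suc n) m {}" using tg unfolding y comp_def by auto
  qed
qed

lemma finite_comp: "finite (comp n k D)"
proof -
  have "comp n k D \<subseteq> (\<lambda>h x. if x \<in> {1..int n} then h x else 0) ` ({1..int n} \<rightarrow>\<^sub>E {0..k})"
  proof
    fix f assume f: "f \<in> comp n k D"
    have le: "f x \<le> k" if "x \<in> {1..int n}" for x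
    proof -
      have "f x \<le> f (int n)" using comp_le[OF f, of x "int n"] that by simp
      then show ?thesis using f by (auto simp: comp_def)
    qed
    show "f \<in> (\<lambda>h x. if x \<in> {1..int n} then h x else 0) ` ({1..int n} \<rightarrow>\<^sub>E {0..k})"
      using f le comp_nonneg[OF f]
      by (intro image_eqI[of _ _ "restrict f {1..int n}"]) (auto simp: fun_eq_iff comp_def)
  qed
  moreover have "finite ({1..int n} \<rightarrow>\<^sub>E {0..k})" by (intro finite_PiE) auto
  ultimately show ?thesis by (rule finite_subset[OF _ finite_imageI])
qed

lemma sum_int_nat: assumes "0 \<le> m" shows "(\<Sum>t\<in>{0..m::int}. g (nat t)) = (\<Sum>k\<le>nat m. g k)"
proof -
  have "{0..m} = int ` {..nat m}"
  proof (intro equalityI subsetI)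
    fix x assume x: "x \<in> {0..m}"
    then have "x = int (nat x)" "nat x \<in> {..nat m}" by auto
    then show "x \<in> int ` {..nat m}" by (rule image_eqI)
  next
    fix x assume "x \<in> int ` {..nat m}" then show "x \<in> {0..m}" using assms by auto
  qed
  then show ?thesis by (simp add: sum.reindex)
qed

lemma card_comp0: "card (comp n m {}) = (if m < 0 then 0 else (nat m + n) choose n)"
proof (induction n arbitrary: m)
  case 0 then show ?case by (simp add: comp0)
next
  case (Suc n)
  show ?case
  proof (cases "m < 0")
    case True
    have "comp (Suc n) m {} = {}"
    proof (intro equalityI subsetI)
      fix f assume f: "f \<in> comp (Suc n) m {}"
      then have "0 \<le> f (int (Suc n))" "f (int (Suc n)) \<le> m" using comp_nonneg[OF f] by (auto simp: comp_def)
      then show "f \<in> {}" using True by simp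
    qed simp
    then show ?thesis using True by simp
  next
    case False
  have "card (comp (Suc n) m {}) = card (Sigma {0..m} (\<lambda>t. comp n t {}))"
    using bij_betw_same_card[OF comp_Suc_bij] .
  also have "\<dots> = (\<Sum>t\<in>{0..m}. card (comp n t {}))"
    by (rule card_SigmaI) (auto simp: finite_comp)
  also have "\<dots> = (\<Sum>t\<in>{0..m}. (nat t + n) choose n)"
    using Suc by (intro sum.cong) auto
  also have "\<dots> = (\<Sum>k\<le>nat m. (k + n) choose n)"
    using sum_int_nat[of m "\<lambda>k. (k + n) choose n"] False by simp
  also have "\<dots> = (\<Sum>k\<le>nat m. (n + k) choose k)"
    by (intro sum.cong refl) (metis add.commute binomial_symmetric le_add1 add_diff_cancel_left')
  also have "\<dots> = Suc (n + nat m) choose nat m" by (rule sum_choose_lower)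
  also have "\<dots> = (nat m + Suc n) choose Suc n"
    by (metis add.commute add_Suc_right binomial_symmetric le_add1 add_diff_cancel_left')
  finally show ?thesis using False by auto
  qed
qed


definition cD :: "int set \<Rightarrow> int \<Rightarrow> int" where
  "cD D p = int (card {d \<in> D. d < p})"

lemma cD_0: "D \<subseteq> {0..<int n} \<Longrightarrow> cD D 0 = 0"
proof -
  assume "D \<subseteq> {0..<int n}"
  then have e: "{d \<in> D. d < 0} = {}" by auto
  show ?thesis unfolding cD_def e by simp
qed

lemma cD_step:
  assumes D: "D \<subseteq> {0..<int n}"
  shows "cD D (p+1) = cD D p + (if p \<in> D then 1 else 0)"
proof -
  have fin2: "finite {d \<in> D. d < p}" by (rule finite_subset[of _ "{0..<int n}"]) (use D in auto)
  show ?thesis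
  proof (cases "p \<in> D")
    case True
    then have e: "{d \<in> D. d < p + 1} = insert p {d \<in> D. d < p}" by (auto simp: zless_add1_eq)
    show ?thesis using True fin2 unfolding cD_def e by simp
  next
    case False
    then have e: "{d \<in> D. d < p + 1} = {d \<in> D. d < p}" using zless_add1_eq by fastforce
    show ?thesis using False unfolding cD_def e by simp
  qed
qed

lemma cD_n: "D \<subseteq> {0..<int n} \<Longrightarrow> cD D (int n) = int (card D)"
proof -
  assume "D \<subseteq> {0..<int n}"
  then have e: "{d \<in> D. d < int n} = D" by auto
  show ?thesis unfolding cD_def e by simp
qed

definition sh :: "nat \<Rightarrow> int set \<Rightarrow> (int \<Rightarrow> int) \<Rightarrow> int \<Rightarrow> int" where
  "sh n D f p = (if p \<in> {1..int n} then f p - cD D p else 0)"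
definition unsh :: "nat \<Rightarrow> int set \<Rightarrow> (int \<Rightarrow> int) \<Rightarrow> int \<Rightarrow> int" where
  "unsh n D h p = (if p \<in> {1..int n} then h p + cD D p else 0)"

lemma sh_val: "D \<subseteq> {0..<int n} \<Longrightarrow> f 0 = 0 \<Longrightarrow> 0 \<le> p \<Longrightarrow> p \<le> int n \<Longrightarrow> sh n D f p = f p - cD D p"
  unfolding sh_def using cD_0[of D n] by (cases "p = 0") auto

lemma unsh_val: "D \<subseteq> {0..<int n} \<Longrightarrow> h 0 = 0 \<Longrightarrow> 0 \<le> p \<Longrightarrow> p \<le> int n \<Longrightarrow> unsh n D h p = h p + cD D p"
  unfolding unsh_def using cD_0[of D n] by (cases "p = 0") auto

lemma card_comp:
  assumes D: "D \<subseteq> {0..<int n}"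
  shows "card (comp n k D) = card (comp n (k - int (card D)) {})"
proof (rule bij_betw_same_card[of "sh n D"], rule bij_betw_byWitness[where f' = "unsh n D"])
  show "\<forall>f\<in>comp n k D. unsh n D (sh n D f) = f"
  proof
    fix f assume f: "f \<in> comp n k D"
    show "unsh n D (sh n D f) = f"
      using comp_zero[OF f] by (auto simp: fun_eq_iff sh_def unsh_def)
  qed
  show "\<forall>h\<in>comp n (k - int (card D)) {}. sh n D (unsh n D h) = h"
  proof
    fix h assume h: "h \<in> comp n (k - int (card D)) {}"
    show "sh n D (unsh n D h) = h"
      using comp_zero[OF h] by (auto simp: fun_eq_iff sh_def unsh_def)
  qed
  show "sh n D ` comp n k D \<subseteq> comp n (k - int (card D)) {}"
  proof
    fix y assume "y \<in> sh n D ` comp n k D"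
    then obtain f where f: "f \<in> comp n k D" and y: "y = sh n D f" by blast
    have f0: "f 0 = 0" using comp_zero[OF f, of 0] by simp
    have a: "\<forall>x. x \<notin> {1..int n} \<longrightarrow> y x = 0" unfolding y sh_def by simp
    have b: "y p \<le> y (p+1)" if p: "p \<in> {0..<int n}" for p
    proof -
      have "f p \<le> f (p+1)" "p \<in> D \<longrightarrow> f p < f (p+1)" using f p unfolding comp_def by auto
      moreover have "y p = f p - cD D p" "y (p+1) = f (p+1) - cD D (p+1)"
        using sh_val[where D=D and n=n and f=f, OF D f0] p unfolding y by auto
      ultimately show ?thesis using cD_step[OF D, of p] by (auto split: if_splits)
    qed
    have c: "y (int n) \<le> k - int (card D)"
    proof -
      have "y (int n) = f (int n) - cD D (int n)" using sh_val[where D=D and n=n and f=f, OF D f0, of "int n"] unfolding y by simp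
      moreover have "f (int n) \<le> k" using f unfolding comp_def by auto
      ultimately show ?thesis using cD_n[OF D] by simp
    qed
    show "y \<in> comp n (k - int (card D)) {}" unfolding comp_def using a b c by auto
  qed
  show "unsh n D ` comp n (k - int (card D)) {} \<subseteq> comp n k D"
  proof
    fix y assume "y \<in> unsh n D ` comp n (k - int (card D)) {}"
    then obtain h where h: "h \<in> comp n (k - int (card D)) {}" and y: "y = unsh n D h" by blast
    have h0: "h 0 = 0" using comp_zero[OF h, of 0] by simp
    have a: "\<forall>x. x \<notin> {1..int n} \<longrightarrow> y x = 0" unfolding y unsh_def by simp
    have b: "y p \<le> y (p+1) \<and> (p \<in> D \<longrightarrow> y p < y (p+1))" if p: "p \<in> {0..<int n}" for p
    proof -
      have "h p \<le> h (p+1)" using h p unfolding comp_def by auto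
      moreover have "y p = h p + cD D p" "y (p+1) = h (p+1) + cD D (p+1)"
        using unsh_val[where D=D and n=n and h=h, OF D h0] p unfolding y by auto
      ultimately show ?thesis using cD_step[OF D, of p] by (auto split: if_splits)
    qed
    have c: "y (int n) \<le> k"
    proof -
      have "y (int n) = h (int n) + cD D (int n)" using unsh_val[where D=D and n=n and h=h, OF D h0, of "int n"] unfolding y by simp
      moreover have "h (int n) \<le> k - int (card D)" using h unfolding comp_def by auto
      ultimately show ?thesis using cD_n[OF D] by simp
    qed
    show "y \<in> comp n k D" unfolding comp_def using a b c by auto
  qed
qed

definition cc :: "nat \<Rightarrow> int \<Rightarrow> nat" where
  "cc n t = (if t < 0 then 0 else (nat t + n) choose n)"

lemma card_comp_cc: "D \<subseteq> {0..<int n} \<Longrightarrow> card (comp n k D) = cc n (k - int (card D))"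
  using card_comp card_comp0 unfolding cc_def by simp


definition ltF :: "(int \<Rightarrow> int) \<Rightarrow> int \<Rightarrow> int \<Rightarrow> bool" where
  "ltF F a b \<longleftrightarrow> F a < F b \<or> (F a = F b \<and> a < b)"

lemma ltF_irrefl: "\<not> ltF F a a" by (simp add: ltF_def)
lemma ltF_trans: "ltF F a b \<Longrightarrow> ltF F b c \<Longrightarrow> ltF F a c" by (auto simp: ltF_def)
lemma ltF_asym: "ltF F a b \<Longrightarrow> \<not> ltF F b a" by (auto simp: ltF_def)
lemma ltF_total: "a \<noteq> b \<Longrightarrow> ltF F a b \<or> ltF F b a" by (auto simp: ltF_def)
lemma ltF_neg: "(\<And>v. F (- v) = - F v) \<Longrightarrow> ltF F (- a) (- b) \<longleftrightarrow> ltF F b a"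
  by (auto simp: ltF_def)

definition rk :: "nat \<Rightarrow> (int \<Rightarrow> int) \<Rightarrow> int \<Rightarrow> int" where
  "rk n F v = (if v \<in> SS n then int (card {v' \<in> SS n. ltF F v' v}) - int n else v)"

lemma fin_SS_sub: "finite {v' \<in> SS n. P v'}"
  by (rule finite_subset[of _ "SS n"]) auto

lemma card_SS: "card (SS n) = 2 * n + 1"
  by simp

lemma rk_mono:
  assumes a: "a \<in> SS n" and b: "b \<in> SS n" and lt: "ltF F a b"
  shows "rk n F a < rk n F b"
proof -
  have "{v' \<in> SS n. ltF F v' a} \<subset> {v' \<in> SS n. ltF F v' b}"
    using a lt ltF_trans ltF_irrefl by blast
  moreover have "finite {v' \<in> SS n. ltF F v' b}" by (rule finite_subset[of _ "SS n"]) auto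
  ultimately have "card {v' \<in> SS n. ltF F v' a} < card {v' \<in> SS n. ltF F v' b}"
    by (simp add: psubset_card_mono)
  then show ?thesis using a b by (simp add: rk_def)
qed

lemma rk_split:
  assumes v: "v \<in> SS n"
  shows "card {v' \<in> SS n. ltF F v' v} + card {v' \<in> SS n. ltF F v v'} = 2 * n"
proof -
  let ?A = "{v' \<in> SS n. ltF F v' v}" and ?B = "{v' \<in> SS n. ltF F v v'}"
  have e: "SS n = insert v (?A \<union> ?B)" using v ltF_total by blast
  have d: "?A \<inter> ?B = {}" using ltF_asym by blast
  have nv: "v \<notin> ?A \<union> ?B" using ltF_irrefl by blast
  have "card (SS n) = Suc (card (?A \<union> ?B))"
    using e nv by (metis card_insert_disjoint finite_Un finite_atLeastAtMost_int finite_subset sup_ge1 subset_insertI)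
  also have "card (?A \<union> ?B) = card ?A + card ?B" by (rule card_Un_disjoint[OF fin_SS_sub fin_SS_sub d])
  finally show ?thesis using card_SS[of n] by simp
qed

lemma rk_range: assumes v: "v \<in> SS n" shows "rk n F v \<in> SS n"
  using rk_split[OF v, of F] v by (simp add: rk_def)

lemma rk_odd:
  assumes odd: "\<And>v. F (- v) = - F v"
  shows "rk n F (- v) = - rk n F v"
proof (cases "v \<in> SS n")
  case False
  then have "- v \<notin> SS n" by auto
  then show ?thesis unfolding rk_def by (simp only: if_not_P[OF False] if_not_P[OF \<open>- v \<notin> SS n\<close>] if_False)
next
  case True
  then have mv: "- v \<in> SS n" by auto
  have "{v' \<in> SS n. ltF F v' (- v)} = uminus ` {v' \<in> SS n. ltF F v v'}"
  proof (intro equalityI subsetI)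
    fix y assume "y \<in> {v' \<in> SS n. ltF F v' (- v)}"
    then have "- y \<in> {v' \<in> SS n. ltF F v v'}" using ltF_neg[of F "- y" v, OF odd] by auto
    then show "y \<in> uminus ` {v' \<in> SS n. ltF F v v'}" by (rule rev_image_eqI) simp
  next
    fix y assume "y \<in> uminus ` {v' \<in> SS n. ltF F v v'}"
    then obtain z where "z \<in> SS n" "ltF F v z" "y = - z" by auto
    then show "y \<in> {v' \<in> SS n. ltF F v' (- v)}" using ltF_neg[of F z v, OF odd] by auto
  qed
  then have "card {v' \<in> SS n. ltF F v' (- v)} = card {v' \<in> SS n. ltF F v v'}"
    by (simp add: card_image)
  then show ?thesis using rk_split[OF True, of F] True mv by (simp add: rk_def)
qed

lemma rk_inj: "inj_on (rk n F) (SS n)"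
proof (rule inj_onI)
  fix a b assume ab: "a \<in> SS n" "b \<in> SS n" "rk n F a = rk n F b"
  show "a = b"
  proof (rule ccontr)
    assume "a \<noteq> b"
    then have "ltF F a b \<or> ltF F b a" by (rule ltF_total)
    then show False using rk_mono[OF ab(1,2), of F] rk_mono[OF ab(2,1), of F] ab(3) by auto
  qed
qed

lemma rk_SP:
  assumes odd: "\<And>v. F (- v) = - F v"
  shows "rk n F \<in> signed_perms n"
proof -
  have "rk n F permutes SS n"
  proof (rule inj_imp_permutes[OF rk_inj])
    show "finite (SS n)" by simp
    show "rk n F x \<in> SS n" if "x \<in> SS n" for x using rk_range[OF that] .
    show "rk n F i = i" if "i \<notin> SS n" for i unfolding rk_def by (simp only: if_not_P[OF that])
  qed
  then show ?thesis unfolding signed_perms_def using rk_odd[where F=F, OF odd] by auto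
qed

lemma rk_iff:
  assumes a: "a \<in> SS n" and b: "b \<in> SS n"
  shows "rk n F a < rk n F b \<longleftrightarrow> ltF F a b"
proof
  assume lt: "rk n F a < rk n F b"
  show "ltF F a b"
  proof (rule ccontr)
    assume "\<not> ltF F a b"
    moreover have "a \<noteq> b" using lt by auto
    ultimately have "ltF F b a" using ltF_total by blast
    then show False using rk_mono[OF b a, of F] lt by simp
  qed
qed (rule rk_mono[OF a b])


definition oddext :: "(int \<Rightarrow> int) \<Rightarrow> int \<Rightarrow> int" where
  "oddext f p = (if 0 \<le> p then f p else - f (- p))"

lemma oddext_odd: "f 0 = 0 \<Longrightarrow> oddext f (- p) = - oddext f p"
  by (auto simp: oddext_def)

lemma oddext_pos: "0 \<le> p \<Longrightarrow> oddext f p = f p"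
  by (simp add: oddext_def)

definition Xs :: "nat \<Rightarrow> int \<Rightarrow> (int \<Rightarrow> int) set" where
  "Xs n k = {x. (\<forall>q. q \<notin> {1..int n} \<longrightarrow> x q = 0) \<and> (\<forall>q. \<bar>x q\<bar> \<le> k)}"

definition T1 :: "nat \<Rightarrow> int \<Rightarrow> ((int \<Rightarrow> int) \<times> (int \<Rightarrow> int)) set" where
  "T1 n k = {(w,f). w \<in> signed_perms n \<and> f \<in> comp n k (dset n w)}"

definition Phi :: "nat \<Rightarrow> (int \<Rightarrow> int) \<times> (int \<Rightarrow> int) \<Rightarrow> int \<Rightarrow> int" where
  "Phi n = (\<lambda>(w,f). \<lambda>q. if q \<in> {1..int n} then oddext f (inv w q) else 0)"

definition PsiW :: "nat \<Rightarrow> (int \<Rightarrow> int) \<Rightarrow> int \<Rightarrow> int" where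
  "PsiW n x = inv (rk n (oddext x))"
definition PsiF :: "nat \<Rightarrow> (int \<Rightarrow> int) \<Rightarrow> int \<Rightarrow> int" where
  "PsiF n x = (\<lambda>p. if p \<in> {1..int n} then oddext x (PsiW n x p) else 0)"
definition Psi :: "nat \<Rightarrow> (int \<Rightarrow> int) \<Rightarrow> (int \<Rightarrow> int) \<times> (int \<Rightarrow> int)" where
  "Psi n x = (PsiW n x, PsiF n x)"

definition xdset :: "nat \<Rightarrow> (int \<Rightarrow> int) \<Rightarrow> int set" where
  "xdset n x = {q \<in> {0..<int n}. x (q+1) < x q}"

lemma Xs_zero: "x \<in> Xs n k \<Longrightarrow> x 0 = 0"
  by (simp add: Xs_def)

lemma Xs_bound: "x \<in> Xs n k \<Longrightarrow> \<bar>oddext x p\<bar> \<le> k"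
  by (auto simp: Xs_def oddext_def)

lemma Psi_facts:
  assumes x: "x \<in> Xs n k"
  defines "F \<equiv> oddext x"
  shows "PsiW n x \<in> signed_perms n" "rk n F \<in> signed_perms n"
    "\<And>p. 0 \<le> p \<Longrightarrow> p \<le> int n \<Longrightarrow> PsiF n x p = F (PsiW n x p)"
    "\<And>p. p \<in> SS n \<Longrightarrow> oddext (PsiF n x) p = F (PsiW n x p)"
    "\<And>v. rk n F (PsiW n x v) = v" "\<And>v. PsiW n x (rk n F v) = v"
proof -
  have odd: "\<And>v. F (- v) = - F v" unfolding F_def using oddext_odd Xs_zero[OF x] by blast
  show u: "rk n F \<in> signed_perms n" by (rule rk_SP[where F=F, OF odd])
  show w: "PsiW n x \<in> signed_perms n" unfolding PsiW_def F_def[symmetric] by (rule SP_inv[OF u])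
  show a: "rk n F (PsiW n x v) = v" for v unfolding PsiW_def F_def[symmetric] by (rule SP_inv_app[OF u])
  show "PsiW n x (rk n F v) = v" for v unfolding PsiW_def F_def[symmetric] by (rule SP_app_inv[OF u])
  have F0: "F 0 = 0" using odd[of 0] by simp
  show pf: "PsiF n x p = F (PsiW n x p)" if "0 \<le> p" "p \<le> int n" for p
  proof (cases "p = 0")
    case True then show ?thesis using SP_zero[OF w] F0 by (simp add: PsiF_def)
  next
    case False then show ?thesis using that by (simp add: PsiF_def F_def)
  qed
  show "oddext (PsiF n x) p = F (PsiW n x p)" if p: "p \<in> SS n" for p
  proof (cases "0 \<le> p")
    case True then show ?thesis using pf[of p] p by (simp add: oddext_def)
  next
    case False
    then have "oddext (PsiF n x) p = - PsiF n x (- p)" by (simp add: oddext_def)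
    also have "\<dots> = - F (PsiW n x (- p))" using pf[of "- p"] p False by simp
    also have "\<dots> = F (PsiW n x p)" using SP_odd[OF w, of p] odd by simp
    finally show ?thesis .
  qed
qed

lemma Psi_in:
  assumes x: "x \<in> Xs n k"
  shows "Psi n x \<in> T1 n k"
proof -
  let ?F = "oddext x" and ?w = "PsiW n x" and ?f = "PsiF n x"
  note fa = Psi_facts[OF x]
  have c1: "\<forall>q. q \<notin> {1..int n} \<longrightarrow> ?f q = 0" by (simp add: PsiF_def)
  have c2: "?f p \<le> ?f (p+1) \<and> (p \<in> dset n ?w \<longrightarrow> ?f p < ?f (p+1))" if p: "p \<in> {0..<int n}" for p
  proof -
    have in1: "?w p \<in> SS n" "?w (p+1) \<in> SS n" using p SP_in[OF fa(1)] by auto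
    have "rk n ?F (?w p) < rk n ?F (?w (p+1))" using fa(5) by simp
    then have lt: "ltF ?F (?w p) (?w (p+1))" using rk_iff[OF in1] by simp
    have e: "?f p = ?F (?w p)" "?f (p+1) = ?F (?w (p+1))" using fa(3) p by auto
    show ?thesis using lt e unfolding ltF_def dset_def by auto
  qed
  have c3: "?f (int n) \<le> k" using fa(3)[of "int n"] Xs_bound[OF x] by (simp add: abs_le_iff)
  show ?thesis unfolding Psi_def T1_def comp_def using fa(1) c1 c2 c3 by auto
qed

lemma Phi_Psi:
  assumes x: "x \<in> Xs n k"
  shows "Phi n (Psi n x) = x"
proof
  fix q
  note fa = Psi_facts[OF x]
  have inv: "inv (PsiW n x) = rk n (oddext x)"
    unfolding PsiW_def using permutes_inv_inv[OF SP_perm[OF fa(2)]] .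
  show "Phi n (Psi n x) q = x q"
  proof (cases "q \<in> {1..int n}")
    case True
    then have "rk n (oddext x) q \<in> SS n" using SP_in[OF fa(2)] by auto
    then have "Phi n (Psi n x) q = oddext x (PsiW n x (rk n (oddext x) q))"
      using True fa(4) by (simp add: Phi_def Psi_def inv)
    also have "\<dots> = x q" using fa(6) True by (simp add: oddext_def)
    finally show ?thesis .
  next
    case False then show ?thesis using x by (auto simp: Phi_def Psi_def Xs_def)
  qed
qed

lemma T1_facts:
  assumes wf: "(w,f) \<in> T1 n k"
  shows "w \<in> signed_perms n" "f \<in> comp n k (dset n w)"
  using wf by (auto simp: T1_def)

lemma Phi_in:
  assumes wf: "(w,f) \<in> T1 n k"
  shows "Phi n (w,f) \<in> Xs n k"
proof -
  note t = T1_facts[OF wf]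
  have b: "\<bar>f p\<bar> \<le> k" for p
  proof (cases "p \<in> {1..int n}")
    case True
    then have "f p \<le> f (int n)" using comp_le[OF t(2), of p "int n"] by simp
    moreover have "f (int n) \<le> k" using t(2) by (simp add: comp_def)
    ultimately show ?thesis using comp_nonneg[OF t(2), of p] by simp
  next
    case False
    have "0 \<le> f (int n)" using comp_nonneg[OF t(2)] .
    moreover have "f (int n) \<le> k" using t(2) by (simp add: comp_def)
    ultimately show ?thesis using comp_zero[OF t(2) False] by simp
  qed
  have k0: "0 \<le> k" using b[of 0] by simp
  show ?thesis unfolding Xs_def Phi_def using b k0 by (auto simp: oddext_def)
qed


lemma step_rel:
  assumes wf: "(w,f) \<in> T1 n k" and p: "- int n \<le> p" "p < int n"
  shows "oddext f p \<le> oddext f (p+1) \<and> (w (p+1) < w p \<longrightarrow> oddext f p < oddext f (p+1))"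
proof -
  note t = T1_facts[OF wf]
  have f0: "f 0 = 0" using comp_zero[OF t(2), of 0] by simp
  have cond: "f q \<le> f (q+1) \<and> (q \<in> dset n w \<longrightarrow> f q < f (q+1))" if "0 \<le> q" "q < int n" for q
    using t(2) that by (simp add: comp_def)
  show ?thesis
  proof (cases "0 \<le> p")
    case True
    then show ?thesis using cond[of p] p by (simp add: oddext_def dset_def)
  next
    case False
    define q where "q = - p - 1"
    have q: "0 \<le> q" "q < int n" using False p by (auto simp: q_def)
    have e1: "oddext f p = - f (q+1)" using False by (simp add: oddext_def q_def)
    have e2: "oddext f (p+1) = - f q"
    proof (cases "p = -1")
      case True then show ?thesis using f0 by (simp add: oddext_def q_def)
    next
      case False
      then have "p + 1 < 0" using \<open>\<not> 0 \<le> p\<close> by simp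
      then show ?thesis by (simp add: oddext_def q_def)
    qed
    have pq1: "p + 1 = - q" by (simp add: q_def)
    have pq2: "p = - (q+1)" by (simp add: q_def)
    have e3: "w (p+1) = - w q" "w p = - w (q+1)"
      unfolding pq1 using SP_odd[OF t(1), of q] apply simp
      apply (subst pq2) using SP_odd[OF t(1), of "q+1"] by simp
    show ?thesis using cond[OF q] e1 e2 e3 q by (auto simp: dset_def)
  qed
qed

definition Rel :: "(int \<Rightarrow> int) \<Rightarrow> (int \<Rightarrow> int) \<Rightarrow> int \<Rightarrow> int \<Rightarrow> bool" where
  "Rel G w c d \<longleftrightarrow> G c < G d \<or> (G c = G d \<and> w c < w d)"

lemma chain_rel:
  assumes wf: "(w,f) \<in> T1 n k" and c: "- int n \<le> c"
  shows "c + int m + 1 \<le> int n \<Longrightarrow> Rel (oddext f) w c (c + int m + 1)"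
proof (induction m)
  case 0
  then show ?case using step_rel[OF wf c] SP_eq_iff[OF T1_facts(1)[OF wf], of c "c+1"] by (auto simp: Rel_def)
next
  case (Suc m)
  then have IH: "Rel (oddext f) w c (c + int m + 1)" by simp
  have s: "oddext f (c + int m + 1) \<le> oddext f (c + int m + 1 + 1) \<and>
     (w (c + int m + 1 + 1) < w (c + int m + 1) \<longrightarrow> oddext f (c + int m + 1) < oddext f (c + int m + 1 + 1))"
    using step_rel[OF wf, of "c + int m + 1"] c Suc.prems by simp
  have e: "c + int (Suc m) + 1 = c + int m + 1 + 1" by simp
  show ?case unfolding e using IH s unfolding Rel_def by auto
qed

lemma rel_lt:
  assumes wf: "(w,f) \<in> T1 n k" and cd: "c \<in> SS n" "d \<in> SS n" "c < d"
  shows "Rel (oddext f) w c d"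
  using chain_rel[OF wf, of c "nat (d - c - 1)"] cd by simp

lemma F_eq:
  assumes wf: "(w,f) \<in> T1 n k"
  shows "oddext (Phi n (w,f)) v = oddext f (inv w v)"
proof -
  note t = T1_facts[OF wf]
  have f0: "f 0 = 0" using comp_zero[OF t(2), of 0] by simp
  have u: "inv w \<in> signed_perms n" by (rule SP_inv[OF t(1)])
  have Godd: "oddext f (- p) = - oddext f p" for p using oddext_odd[of f p] f0 by simp
  have Gz: "oddext f p = 0" if "p \<notin> SS n" for p
  proof -
    have "p \<notin> {1..int n}" "- p \<notin> {1..int n}" using that by auto
    then show ?thesis by (simp add: oddext_def comp_zero[OF t(2)])
  qed
  consider "v \<in> {1..int n}" | "v = 0" | "- v \<in> {1..int n}" | "v \<notin> SS n" by force
  then show ?thesis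
  proof cases
    case 1 then show ?thesis by (simp add: Phi_def oddext_def)
  next
    case 2 then show ?thesis using SP_zero[OF u] f0 by (simp add: Phi_def oddext_def)
  next
    case 3
    then have "oddext (Phi n (w,f)) v = - oddext f (inv w (- v))" by (simp add: Phi_def oddext_def)
    also have "\<dots> = oddext f (inv w v)" using SP_odd[OF u, of v] Godd by simp
    finally show ?thesis .
  next
    case 4
    then have "- v \<notin> {1..int n}" "v \<notin> {1..int n}" by auto
    then have "oddext (Phi n (w,f)) v = 0" by (auto simp: Phi_def oddext_def)
    moreover have "inv w v = v" using SP_out[OF u 4] .
    ultimately show ?thesis using Gz[OF 4] by simp
  qed
qed

lemma key_iff:
  assumes wf: "(w,f) \<in> T1 n k" and ab: "a \<in> SS n" "b \<in> SS n"
  shows "ltF (oddext (Phi n (w,f))) a b \<longleftrightarrow> inv w a < inv w b"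
proof -
  note t = T1_facts[OF wf]
  have u: "inv w \<in> signed_perms n" by (rule SP_inv[OF t(1)])
  have fwd: "ltF (oddext (Phi n (w,f))) a b" if ab: "a \<in> SS n" "b \<in> SS n" "inv w a < inv w b" for a b
  proof -
    have "Rel (oddext f) w (inv w a) (inv w b)"
      using rel_lt[OF wf SP_in[OF u ab(1)] SP_in[OF u ab(2)] ab(3)] .
    then show ?thesis unfolding Rel_def ltF_def F_eq[OF wf] using SP_inv_app[OF t(1)] by simp
  qed
  show ?thesis
  proof
    assume lt: "ltF (oddext (Phi n (w,f))) a b"
    show "inv w a < inv w b"
    proof (rule ccontr)
      assume "\<not> inv w a < inv w b"
      moreover have "a \<noteq> b" using lt ltF_irrefl by metis
      then have "inv w a \<noteq> inv w b" using SP_eq_iff[OF u] by simp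
      ultimately have "inv w b < inv w a" by simp
      then have "ltF (oddext (Phi n (w,f))) b a" using fwd ab by simp
      then show False using lt ltF_asym by metis
    qed
  qed (rule fwd[OF ab])
qed

lemma card_lt_SS:
  assumes c: "c \<in> SS n"
  shows "card {p \<in> SS n. p < c} = nat (c + int n)"
proof -
  have "{p \<in> SS n. p < c} = {- int n..<c}" using c by auto
  then show ?thesis by simp
qed

lemma rk_Phi:
  assumes wf: "(w,f) \<in> T1 n k"
  shows "rk n (oddext (Phi n (w,f))) = inv w"
proof
  fix v
  note t = T1_facts[OF wf]
  have u: "inv w \<in> signed_perms n" by (rule SP_inv[OF t(1)])
  show "rk n (oddext (Phi n (w,f))) v = inv w v"
  proof (cases "v \<in> SS n")
    case False
    then show ?thesis unfolding rk_def by (simp only: if_not_P[OF False] if_False SP_out[OF u False])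
  next
    case True
    have e1: "{v' \<in> SS n. ltF (oddext (Phi n (w,f))) v' v} = {v' \<in> SS n. inv w v' < inv w v}"
      using key_iff[OF wf _ True] by auto
    have e2: "inv w ` {v' \<in> SS n. inv w v' < inv w v} = {p \<in> SS n. p < inv w v}"
    proof (intro equalityI subsetI)
      fix y assume "y \<in> inv w ` {v' \<in> SS n. inv w v' < inv w v}"
      then show "y \<in> {p \<in> SS n. p < inv w v}" using SP_in[OF u] by auto
    next
      fix y assume y: "y \<in> {p \<in> SS n. p < inv w v}"
      have "w y \<in> SS n" using SP_in[OF t(1)] y by auto
      moreover have "inv w (w y) = y" using SP_app_inv[OF t(1)] .
      ultimately show "y \<in> inv w ` {v' \<in> SS n. inv w v' < inv w v}" using y
        by (intro image_eqI[of _ _ "w y"]) auto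
    qed
    have i: "inj_on (inv w) {v' \<in> SS n. inv w v' < inv w v}"
      using SP_inj[OF u] by (auto intro: inj_on_subset)
    have "card {v' \<in> SS n. ltF (oddext (Phi n (w,f))) v' v} = card {v' \<in> SS n. inv w v' < inv w v}"
      unfolding e1 ..
    also have "\<dots> = card (inv w ` {v' \<in> SS n. inv w v' < inv w v})" using card_image[OF i] by simp
    also have "\<dots> = nat (inv w v + int n)" unfolding e2 using card_lt_SS[OF SP_in[OF u True]] .
    finally have "card {v' \<in> SS n. ltF (oddext (Phi n (w,f))) v' v} = nat (inv w v + int n)" .
    moreover have "inv w v + int n \<ge> 0" using SP_in[OF u True] by simp
    ultimately show ?thesis using True unfolding rk_def by simp
  qed
qed

lemma Psi_Phi:
  assumes wf: "(w,f) \<in> T1 n k"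
  shows "Psi n (Phi n (w,f)) = (w,f)"
proof -
  note t = T1_facts[OF wf]
  have W: "PsiW n (Phi n (w,f)) = w"
    unfolding PsiW_def rk_Phi[OF wf] using permutes_inv_inv[OF SP_perm[OF t(1)]] .
  have "PsiF n (Phi n (w,f)) = f"
  proof
    fix p
    show "PsiF n (Phi n (w,f)) p = f p"
    proof (cases "p \<in> {1..int n}")
      case True
      then show ?thesis unfolding PsiF_def W F_eq[OF wf] using SP_app_inv[OF t(1)]
        by (simp add: oddext_def)
    next
      case False then show ?thesis unfolding PsiF_def by (simp only: if_not_P[OF False] if_False comp_zero[OF t(2) False])
    qed
  qed
  then show ?thesis using W by (simp add: Psi_def)
qed

lemma Phi_bij: "bij_betw (Phi n) (T1 n k) (Xs n k)"
proof (rule bij_betw_byWitness[where f' = "Psi n"])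
  show "\<forall>a\<in>T1 n k. Psi n (Phi n a) = a" using Psi_Phi by auto
  show "\<forall>a'\<in>Xs n k. Phi n (Psi n a') = a'" using Phi_Psi by auto
  show "Phi n ` T1 n k \<subseteq> Xs n k" using Phi_in by auto
  show "Psi n ` Xs n k \<subseteq> T1 n k" using Psi_in by auto
qed

lemma dset_Phi:
  assumes wf: "(w,f) \<in> T1 n k"
  shows "dset n (inv w) = xdset n (Phi n (w,f))"
proof -
  have "inv w (q+1) < inv w q \<longleftrightarrow> Phi n (w,f) (q+1) < Phi n (w,f) q" if q: "q \<in> {0..<int n}" for q
  proof -
    have "inv w (q+1) < inv w q \<longleftrightarrow> ltF (oddext (Phi n (w,f))) (q+1) q"
      using key_iff[OF wf, of "q+1" q] q by simp
    also have "\<dots> \<longleftrightarrow> Phi n (w,f) (q+1) < Phi n (w,f) q"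
      using q by (auto simp: ltF_def oddext_def)
    finally show ?thesis .
  qed
  then show ?thesis unfolding dset_def xdset_def by auto
qed


definition encN :: "int \<Rightarrow> (int \<Rightarrow> int) \<times> (int \<Rightarrow> int) \<Rightarrow> int \<Rightarrow> int" where
  "encN k = (\<lambda>(x,g). \<lambda>q. (2*k+1) * g q + x q)"

definition decN :: "nat \<Rightarrow> int \<Rightarrow> (int \<Rightarrow> int) \<Rightarrow> (int \<Rightarrow> int) \<times> (int \<Rightarrow> int)" where
  "decN n k N = ((\<lambda>q. if q \<in> {1..int n} then (N q + k) mod (2*k+1) - k else 0),
                 (\<lambda>q. if q \<in> {1..int n} then (N q + k) div (2*k+1) else 0))"

lemma dec_small:
  fixes k x :: int
  assumes "0 \<le> k" "\<bar>x\<bar> \<le> k"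
  shows "((2*k+1) * g + x + k) div (2*k+1) = g" "((2*k+1) * g + x + k) mod (2*k+1) = x + k"
proof -
  have a: "0 \<le> x + k" "x + k < 2*k+1" using assms by auto
  have e: "((2*k+1) * g + x + k) = (x + k) + g * (2*k+1)" by (simp add: algebra_simps)
  have nz: "2*k+1 \<noteq> 0" using assms by simp
  show "((2*k+1) * g + x + k) div (2*k+1) = g" unfolding e
    using a div_mult_self1[OF nz, of "x+k" g] by (simp add: div_pos_pos_trivial)
  show "((2*k+1) * g + x + k) mod (2*k+1) = x + k" unfolding e
    using a mod_mult_self1[of "x+k" g "2*k+1"] by (simp add: mod_pos_pos_trivial)
qed

lemma enc_bij:
  assumes k: "0 \<le> k" and l: "0 \<le> l"
  shows "bij_betw (encN k) (Sigma (Xs n k) (\<lambda>x. comp n l (xdset n x))) (comp n (2*k*l + k + l) {})"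
proof (rule bij_betw_byWitness[where f' = "decN n k"])
  let ?K = "2*k+1"
  have K: "0 < ?K" using k by simp
  show "\<forall>a\<in>Sigma (Xs n k) (\<lambda>x. comp n l (xdset n x)). decN n k (encN k a) = a"
  proof
    fix a assume "a \<in> Sigma (Xs n k) (\<lambda>x. comp n l (xdset n x))"
    then obtain x g where a: "a = (x,g)" "x \<in> Xs n k" "g \<in> comp n l (xdset n x)" by auto
    have xb: "\<bar>x q\<bar> \<le> k" for q using a(2) by (simp add: Xs_def)
    have "decN n k (encN k (x,g)) = (x,g)"
      unfolding decN_def encN_def using dec_small[OF k xb] comp_zero[OF a(3)] a(2)
      by (auto simp: fun_eq_iff Xs_def add.assoc)
    then show "decN n k (encN k a) = a" using a by simp
  qed
  show "\<forall>N\<in>comp n (2*k*l + k + l) {}. encN k (decN n k N) = N"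
  proof
    fix N assume N: "N \<in> comp n (2*k*l + k + l) {}"
    show "encN k (decN n k N) = N"
    proof
      fix q
      show "encN k (decN n k N) q = N q"
      proof (cases "q \<in> {1..int n}")
        case True
        then show ?thesis unfolding encN_def decN_def
          using div_mult_mod_eq[of "N q + k" ?K] by (simp add: algebra_simps)
      next
        case False
        then show ?thesis unfolding encN_def decN_def using comp_zero[OF N False] by auto
      qed
    qed
  qed
  show "encN k ` Sigma (Xs n k) (\<lambda>x. comp n l (xdset n x)) \<subseteq> comp n (2*k*l + k + l) {}"
  proof
    fix y assume "y \<in> encN k ` Sigma (Xs n k) (\<lambda>x. comp n l (xdset n x))"
    then obtain x g where a: "y = encN k (x,g)" "x \<in> Xs n k" "g \<in> comp n l (xdset n x)" by auto
    have xb: "\<bar>x q\<bar> \<le> k" for q using a(2) by (simp add: Xs_def)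
    have y: "y q = ?K * g q + x q" for q using a(1) by (simp add: encN_def)
    have c1: "\<forall>q. q \<notin> {1..int n} \<longrightarrow> y q = 0" using comp_zero[OF a(3)] a(2) by (simp add: y Xs_def)
    have c2: "y p \<le> y (p+1)" if p: "p \<in> {0..<int n}" for p
    proof -
      have gm: "g p \<le> g (p+1)" and gs: "x (p+1) < x p \<longrightarrow> g p < g (p+1)"
        using a(3) p by (auto simp: comp_def xdset_def)
      show ?thesis
      proof (cases "g p < g (p+1)")
        case True
        then have "?K * (g p + 1) \<le> ?K * g (p+1)" using K by (intro mult_left_mono) auto
        then have "?K * g p + ?K \<le> ?K * g (p+1)" by (simp add: algebra_simps)
        moreover have "x p - x (p+1) \<le> 2 * k" using xb[of p] xb[of "p+1"] by (simp add: abs_le_iff)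
        ultimately show ?thesis unfolding y by simp
      next
        case False
        then have "g p = g (p+1)" "x p \<le> x (p+1)" using gm gs by auto
        then show ?thesis unfolding y by simp
      qed
    qed
    have c3: "y (int n) \<le> 2*k*l + k + l"
    proof -
      have "g (int n) \<le> l" using a(3) by (simp add: comp_def)
      then have "?K * g (int n) \<le> ?K * l" using K by (intro mult_left_mono) auto
      moreover have "x (int n) \<le> k" using xb[of "int n"] by (simp add: abs_le_iff)
      ultimately show ?thesis unfolding y by (simp add: algebra_simps)
    qed
    show "y \<in> comp n (2*k*l + k + l) {}" unfolding comp_def using c1 c2 c3 by auto
  qed
  show "decN n k ` comp n (2*k*l + k + l) {} \<subseteq> Sigma (Xs n k) (\<lambda>x. comp n l (xdset n x))"
  proof
    fix y assume "y \<in> decN n k ` comp n (2*k*l + k + l) {}"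
    then obtain N where N: "N \<in> comp n (2*k*l + k + l) {}" and y: "y = decN n k N" by auto
    define X where "X = fst y"
    define G where "G = snd y"
    have N0: "N 0 = 0" using comp_zero[OF N, of 0] by simp
    have k0: "k div ?K = 0" "k mod ?K = k" using k by (simp_all add: div_pos_pos_trivial mod_pos_pos_trivial)
    have Xv: "X q = (N q + k) mod ?K - k" if "0 \<le> q" "q \<le> int n" for q
    proof (cases "q = 0")
      case True then show ?thesis using N0 k0 by (simp add: X_def y decN_def)
    next
      case False then have "q \<in> {1..int n}" using that by simp
      then show ?thesis by (simp add: X_def y decN_def)
    qed
    have Gv: "G q = (N q + k) div ?K" if "0 \<le> q" "q \<le> int n" for q
    proof (cases "q = 0")
      case True then show ?thesis using N0 k0 by (simp add: G_def y decN_def)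
    next
      case False then have "q \<in> {1..int n}" using that by simp
      then show ?thesis by (simp add: G_def y decN_def)
    qed
    have NXG: "N q = ?K * G q + X q" if "0 \<le> q" "q \<le> int n" for q
      using Xv[OF that] Gv[OF that] div_mult_mod_eq[of "N q + k" ?K] by (simp add: algebra_simps)
    have X: "X \<in> Xs n k"
    proof -
      have "\<bar>X q\<bar> \<le> k" for q
        using pos_mod_sign[OF K, of "N q + k"] pos_mod_bound[OF K, of "N q + k"] k
        by (auto simp: X_def y decN_def abs_le_iff)
      then show ?thesis unfolding Xs_def by (auto simp: X_def y decN_def)
    qed
    have G: "G \<in> comp n l (xdset n X)"
    proof -
      have c1: "\<forall>q. q \<notin> {1..int n} \<longrightarrow> G q = 0" by (simp add: G_def y decN_def)
      have c2: "G p \<le> G (p+1) \<and> (p \<in> xdset n X \<longrightarrow> G p < G (p+1))" if p: "p \<in> {0..<int n}" for p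
      proof -
        have Nm: "N p \<le> N (p+1)" using N p by (simp add: comp_def)
        then have "(N p + k) div ?K \<le> (N (p+1) + k) div ?K" using K by (intro zdiv_mono1) auto
        then have "G p \<le> G (p+1)" using Gv[of p] Gv[of "p+1"] p by simp
        moreover have "G p < G (p+1)" if "X (p+1) < X p"
        proof (rule ccontr)
          assume "\<not> G p < G (p+1)"
          then have "G p = G (p+1)" using \<open>G p \<le> G (p+1)\<close> by simp
          then show False using NXG[of p] NXG[of "p+1"] p that Nm by simp
        qed
        ultimately show ?thesis by (simp add: xdset_def)
      qed
      have c3: "G (int n) \<le> l"
      proof -
        have "N (int n) \<le> 2*k*l + k + l" using N by (simp add: comp_def)
        then have "(N (int n) + k) div ?K \<le> (2*k*l + k + l + k) div ?K" using K by (intro zdiv_mono1) auto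
        moreover have "(2*k*l + k + l + k) div ?K = l"
        proof -
          have "2*k*l + k + l + k = 2*k + l * ?K" by (simp add: algebra_simps)
          then show ?thesis using k by (simp add: div_pos_pos_trivial)
        qed
        ultimately show ?thesis using Gv[of "int n"] by simp
      qed
      show ?thesis unfolding comp_def using c1 c2 c3 by auto
    qed
    have "y = (X, G)" by (simp add: X_def G_def)
    then show "y \<in> Sigma (Xs n k) (\<lambda>x. comp n l (xdset n x))" using X G by simp
  qed
qed


lemma finite_SP: "finite (signed_perms n)"
  by (rule finite_subset[OF _ finite_permutations[of "SS n"]]) (auto simp: signed_perms_def)

lemma T1_Sigma: "T1 n k = Sigma (signed_perms n) (\<lambda>w. comp n k (dset n w))"
  by (auto simp: T1_def)

lemma finite_T1: "finite (T1 n k)"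
  unfolding T1_Sigma by (intro finite_SigmaI finite_SP finite_comp)

lemma finite_Xs: "finite (Xs n k)"
  using bij_betw_finite[OF Phi_bij] finite_T1 by blast

lemma dset_sub: "dset n w \<subseteq> {0..<int n}" by (auto simp: dset_def)
lemma xdset_sub: "xdset n x \<subseteq> {0..<int n}" by (auto simp: xdset_def)

theorem ident:
  assumes k: "0 \<le> k" and l: "0 \<le> l"
  shows "(\<Sum>w\<in>signed_perms n. cc n (k - int (card (dset n w))) * cc n (l - int (card (dset n (inv w)))))
         = cc n (2*k*l + k + l)"
proof -
  have "(\<Sum>w\<in>signed_perms n. cc n (k - int (card (dset n w))) * cc n (l - int (card (dset n (inv w)))))
      = (\<Sum>w\<in>signed_perms n. card (comp n k (dset n w)) * card (comp n l (dset n (inv w))))"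
    using card_comp_cc[OF dset_sub] by simp
  also have "\<dots> = (\<Sum>w\<in>signed_perms n. \<Sum>f\<in>comp n k (dset n w). card (comp n l (dset n (inv w))))"
    by simp
  also have "\<dots> = (\<Sum>(w,f)\<in>T1 n k. card (comp n l (dset n (inv w))))"
    unfolding T1_Sigma by (rule sum.Sigma) (auto intro: finite_SP finite_comp)
  also have "\<dots> = (\<Sum>a\<in>T1 n k. card (comp n l (xdset n (Phi n a))))"
    by (rule sum.cong) (auto simp: dset_Phi)
  also have "\<dots> = (\<Sum>x\<in>Xs n k. card (comp n l (xdset n x)))"
    by (rule sum.reindex_bij_betw[OF Phi_bij])
  also have "\<dots> = card (Sigma (Xs n k) (\<lambda>x. comp n l (xdset n x)))"
    by (rule card_SigmaI[symmetric]) (auto intro: finite_Xs finite_comp)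
  also have "\<dots> = card (comp n (2*k*l + k + l) {})"
    by (rule bij_betw_same_card[OF enc_bij[OF k l]])
  also have "\<dots> = cc n (2*k*l + k + l)"
    using card_comp_cc[of "{}" n] by simp
  finally show ?thesis .
qed


definition c :: "nat \<Rightarrow> int \<Rightarrow> int" where
  "c m t = int (cc m t)"

lemma c_neg: "t < 0 \<Longrightarrow> c m t = 0" by (simp add: c_def cc_def)
lemma c_zero: "c m 0 = 1" by (simp add: c_def cc_def)

lemma c_nat: "c m (int s) = int ((s + m) choose m)"
  by (simp add: c_def cc_def)

lemma c_F1:
  assumes "1 \<le> n"
  shows "c (n - 1) t = c n t - c n (t - 1)"
proof (cases "t < 0")
  case True then show ?thesis by (simp add: c_def cc_def)
next
  case False
  obtain m where n: "n = Suc m" using assms by (cases n) auto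
  obtain s where t: "t = int s" using False by (metis nonneg_int_cases not_less)
  have a: "c n t = int ((s + m) choose m) + int ((s + m) choose Suc m)"
    unfolding t c_nat n by simp
  have b: "c n (t - 1) = int ((s + m) choose Suc m)"
  proof (cases s)
    case 0 then show ?thesis by (simp add: t c_neg)
  next
    case (Suc s')
    then have "t - 1 = int s'" using t by simp
    then show ?thesis unfolding n using Suc by (simp add: c_nat del: binomial_Suc_Suc)
  qed
  have "c (n - 1) t = int ((s + m) choose m)" unfolding t c_nat n by simp
  then show ?thesis using a b by simp
qed

lemma c_F2:
  assumes "1 \<le> n" "0 \<le> t"
  shows "(t + int n) * c (n - 1) t = int n * c n t"
proof -
  obtain m where n: "n = Suc m" using assms by (cases n) auto
  obtain s where t: "t = int s" using assms by (metis nonneg_int_cases)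
  have "Suc (s + m) * ((s + m) choose m) = (Suc (s + m) choose Suc m) * Suc m"
    by (rule Suc_times_binomial_eq)
  then have "int (Suc (s + m)) * int ((s + m) choose m) = int (Suc m) * int (Suc (s + m) choose Suc m)"
    by (metis of_nat_mult mult.commute)
  moreover have "c (n - 1) t = int ((s + m) choose m)" unfolding t c_nat n by simp
  moreover have "c n t = int (Suc (s + m) choose Suc m)" unfolding t c_nat n by simp
  ultimately show ?thesis unfolding t n by (simp add: algebra_simps)
qed

lemma c_F3:
  assumes "1 \<le> n"
  shows "t * c (n - 1) t = int n * c n (t - 1)"
proof (cases "t < 0")
  case True then show ?thesis by (simp add: c_neg)
next
  case False
  have e1: "(t + int n) * c (n - 1) t = int n * c n t" using c_F2[OF assms] False by simp
  have e2: "int n * c (n - 1) t = int n * c n t - int n * c n (t - 1)"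
    unfolding c_F1[OF assms] by (simp add: right_diff_distrib)
  have "t * c (n - 1) t = (t + int n) * c (n - 1) t - int n * c (n - 1) t" by (simp add: algebra_simps)
  then show ?thesis using e1 e2 by simp
qed

lemma pointwise:
  assumes n: "1 \<le> n"
  shows "(2*k*l + k + l + int n) * (c (n-1) (k - i) * c (n-1) (l - j)) =
     (2*i*j + i + j + int n) * (c n (k - i) * c n (l - j))
   + ((2*j+1) * int n - (2*i*j + i + j + int n)) * (c n (k - i - 1) * c n (l - j))
   + ((2*i+1) * int n - (2*i*j + i + j + int n)) * (c n (k - i) * c n (l - j - 1))
   + (2 * int n * int n - (2*j+1) * int n - (2*i+1) * int n + (2*i*j + i + j + int n)) * (c n (k - i - 1) * c n (l - j - 1))"
proof -
  define a where "a = k - i"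
  define e where "e = l - j"
  define x where "x = c (n-1) a"
  define y where "y = c (n-1) e"
  define A0 where "A0 = c n a"
  define A1 where "A1 = c n (a - 1)"
  define E0 where "E0 = c n e"
  define E1 where "E1 = c n (e - 1)"
  have kx: "k = a + i" "l = e + j" by (simp_all add: a_def e_def)
  have hx: "x = A0 - A1" "y = E0 - E1" unfolding x_def y_def A0_def A1_def E0_def E1_def using c_F1[OF n] by simp_all
  have ax: "a * x = int n * A1" "e * y = int n * E1" unfolding x_def y_def A1_def E1_def using c_F3[OF n] by simp_all
  have "(2*k*l + k + l + int n) * (x * y) = 2*(a*x)*(e*y) + (2*j+1)*(a*x)*y + (2*i+1)*x*(e*y) + (2*i*j + i + j + int n)*x*y"
    unfolding kx by (simp add: algebra_simps)
  also have "\<dots> = 2*(int n * A1)*(int n * E1) + (2*j+1)*(int n * A1)*(E0 - E1) + (2*i+1)*(A0 - A1)*(int n * E1) + (2*i*j + i + j + int n)*(A0 - A1)*(E0 - E1)"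
    unfolding ax unfolding hx ..
  also have "\<dots> = (2*i*j + i + j + int n) * (A0 * E0)
   + ((2*j+1) * int n - (2*i*j + i + j + int n)) * (A1 * E0)
   + ((2*i+1) * int n - (2*i*j + i + j + int n)) * (A0 * E1)
   + (2 * int n * int n - (2*j+1) * int n - (2*i+1) * int n + (2*i*j + i + j + int n)) * (A1 * E1)"
    by (simp add: algebra_simps)
  finally show ?thesis unfolding x_def y_def A0_def A1_def E0_def E1_def a_def e_def by (simp add: algebra_simps)
qed


lemma shift_sum:
  fixes f :: "int \<Rightarrow> int"
  assumes "f 0 = 0" "f (K+1) = 0" "0 \<le> K"
  shows "(\<Sum>i\<in>{0..K}. f (i+1)) = (\<Sum>i\<in>{0..K}. f i)"
proof -
  have im: "(\<lambda>i. i+1) ` {0..K} = {1..K+1}"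
  proof (intro equalityI subsetI)
    fix x assume "x \<in> {1..K+1}" then show "x \<in> (\<lambda>i. i+1) ` {0..K}"
      by (intro image_eqI[of _ _ "x - 1"]) auto
  qed auto
  have "(\<Sum>i\<in>{0..K}. f (i+1)) = (\<Sum>i\<in>{1..K+1}. f i)"
    unfolding im[symmetric] by (subst sum.reindex) (auto simp: inj_on_def)
  also have "{1..K+1} = insert (K+1) {1..K}" using assms by auto
  also have "(\<Sum>i\<in>insert (K+1) {1..K}. f i) = (\<Sum>i\<in>{1..K}. f i)" using assms by simp
  also have "\<dots> = (\<Sum>i\<in>insert 0 {1..K}. f i)" using assms by simp
  also have "insert 0 {1..K} = {0..K}" using assms by auto
  finally show ?thesis .
qed

lemma uniq:
  fixes D :: "int \<Rightarrow> int \<Rightarrow> int" and cf :: "int \<Rightarrow> int"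
  assumes cneg: "\<And>t. t < 0 \<Longrightarrow> cf t = 0" and c0: "cf 0 = 1"
    and H: "\<And>k l. 0 \<le> k \<Longrightarrow> 0 \<le> l \<Longrightarrow> (\<Sum>I\<in>{0..K}. \<Sum>J\<in>{0..K}. D I J * (cf (k-I) * cf (l-J))) = 0"
  shows "0 \<le> I0 \<Longrightarrow> I0 \<le> K \<Longrightarrow> 0 \<le> J0 \<Longrightarrow> J0 \<le> K \<Longrightarrow> D I0 J0 = 0"
proof (induction "nat (I0 + J0)" arbitrary: I0 J0 rule: less_induct)
  case less
  have tm: "D I J * (cf (I0-I) * cf (J0-J)) = (if I = I0 \<and> J = J0 then D I0 J0 else 0)"
    if IJ: "I \<in> {0..K}" "J \<in> {0..K}" for I J
  proof (cases "I = I0 \<and> J = J0")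
    case True then show ?thesis using c0 by simp
  next
    case False
    show ?thesis
    proof (cases "I0 < I \<or> J0 < J")
      case True then show ?thesis using cneg False by auto
    next
      case False2: False
      then have "nat (I + J) < nat (I0 + J0)" using False IJ by auto
      then have "D I J = 0" using less.hyps[of I J] IJ by auto
      then show ?thesis using False by auto
    qed
  qed
  have "0 = (\<Sum>I\<in>{0..K}. \<Sum>J\<in>{0..K}. D I J * (cf (I0-I) * cf (J0-J)))"
    using H[of I0 J0] less.prems by simp
  also have "\<dots> = (\<Sum>I\<in>{0..K}. \<Sum>J\<in>{0..K}. (if I = I0 \<and> J = J0 then D I0 J0 else 0))"
    by (intro sum.cong refl) (use tm in auto)
  also have "\<dots> = (\<Sum>I\<in>{0..K}. (if I = I0 then D I0 J0 else 0))"
  proof (intro sum.cong refl)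
    fix I assume "I \<in> {0..K}"
    have "(\<Sum>J\<in>{0..K}. (if I = I0 \<and> J = J0 then D I0 J0 else 0)) = (\<Sum>J\<in>{0..K}. (if J = J0 then (if I = I0 then D I0 J0 else 0) else 0))"
      by (intro sum.cong refl) auto
    also have "\<dots> = (if I = I0 then D I0 J0 else 0)" using less.prems by (simp add: sum.delta')
    finally show "(\<Sum>J\<in>{0..K}. (if I = I0 \<and> J = J0 then D I0 J0 else 0)) = (if I = I0 then D I0 J0 else 0)" .
  qed
  also have "\<dots> = D I0 J0" using less.prems by (simp add: sum.delta')
  finally show ?case by simp
qed

lemma Bnum_zero:
  assumes "i < 0 \<or> int m < i \<or> j < 0 \<or> int m < j"
  shows "Bnum m i j = 0"
proof -
  have "{w \<in> signed_perms m. int (des m w) = i \<and> int (des m (inv w)) = j} = {}"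
    using assms des_le SP_inv by fastforce
  then show ?thesis unfolding Bnum_def by (simp only: card.empty of_nat_0)
qed

definition Fs :: "nat \<Rightarrow> int \<Rightarrow> int \<Rightarrow> int \<Rightarrow> int" where
  "Fs m K k l = (\<Sum>i\<in>{0..K}. \<Sum>j\<in>{0..K}. Bnum m i j * (c m (k-i) * c m (l-j)))"

lemma Fs_eval:
  assumes K: "int m \<le> K" and k: "0 \<le> k" and l: "0 \<le> l"
  shows "Fs m K k l = c m (2*k*l + k + l)"
proof -
  let ?S = "signed_perms m"
  let ?g = "\<lambda>w. (int (des m w), int (des m (inv w)))"
  let ?f = "\<lambda>(i,j). c m (k-i) * c m (l-j)"
  have "c m (2*k*l + k + l) = int (\<Sum>w\<in>?S. cc m (k - int (card (dset m w))) * cc m (l - int (card (dset m (inv w)))))"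
    using ident[OF k l, of m] by (simp add: c_def)
  also have "\<dots> = (\<Sum>w\<in>?S. ?f (?g w))"
    by (simp add: c_def des_char SP_inv)
  also have "\<dots> = (\<Sum>y\<in>{0..K} \<times> {0..K}. of_nat (card {w \<in> ?S. ?g w = y}) * ?f y)"
  proof (rule sum_fun_comp)
    show "finite ?S" by (rule finite_SP)
    show "finite ({0..K} \<times> {0..K})" by simp
    show "?g ` ?S \<subseteq> {0..K} \<times> {0..K}" using des_le SP_inv K by fastforce
  qed
  also have "\<dots> = (\<Sum>y\<in>{0..K} \<times> {0..K}. Bnum m (fst y) (snd y) * ?f y)"
    by (intro sum.cong refl) (auto simp: Bnum_def)
  also have "\<dots> = Fs m K k l"
    unfolding Fs_def by (simp add: sum.cartesian_product case_prod_beta)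
  finally show ?thesis by simp
qed


lemma shift_outer:
  fixes g phi :: "int \<Rightarrow> int \<Rightarrow> int"
  assumes "\<And>j. g (-1) j = 0" "\<And>j. g K j = 0" "0 \<le> K"
  shows "(\<Sum>i\<in>{0..K}. \<Sum>j\<in>{0..K}. g i j * phi (i+1) j) = (\<Sum>i\<in>{0..K}. \<Sum>j\<in>{0..K}. g (i-1) j * phi i j)"
  using shift_sum[of "\<lambda>I. \<Sum>j\<in>{0..K}. g (I-1) j * phi I j" K] assms by simp

lemma shift_inner:
  fixes g phi :: "int \<Rightarrow> int \<Rightarrow> int"
  assumes "\<And>i. g i (-1) = 0" "\<And>i. g i K = 0" "0 \<le> K"
  shows "(\<Sum>i\<in>{0..K}. \<Sum>j\<in>{0..K}. g i j * phi i (j+1)) = (\<Sum>i\<in>{0..K}. \<Sum>j\<in>{0..K}. g i (j-1) * phi i j)"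
proof (rule sum.cong[OF refl])
  fix i
  show "(\<Sum>j\<in>{0..K}. g i j * phi i (j+1)) = (\<Sum>j\<in>{0..K}. g i (j-1) * phi i j)"
    using shift_sum[of "\<lambda>J. g i (J-1) * phi i J" K] assms by simp
qed

theorem main:
  fixes n :: nat and i j :: int
  assumes n1: "n \<ge> 1"
  shows "int n * Bnum n i j =
      (int n + i + j + 2*i*j) * Bnum (n - 1) i j
    + (1 - i + (2 * int n + 1) * j - 2*i*j) * Bnum (n - 1) (i - 1) j
    + (1 - j + (2 * int n + 1) * i - 2*i*j) * Bnum (n - 1) i (j - 1)
    + (int n * (2 * int n + 3) - (2 * int n + 1) * i - (2 * int n + 1) * j + 2*i*j)
        * Bnum (n - 1) (i - 1) (j - 1)"
proof -
  define K where "K = int n + 1"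
  define b where "b = Bnum (n - 1)"
  define Q00 where "Q00 I J = 2*I*J + I + J + int n" for I J :: int
  define Q10 where "Q10 I J = (2*J+1) * int n - Q00 I J" for I J :: int
  define Q01 where "Q01 I J = (2*I+1) * int n - Q00 I J" for I J :: int
  define Q11 where "Q11 I J = 2 * int n * int n - (2*J+1) * int n - (2*I+1) * int n + Q00 I J" for I J :: int
  define R where "R I J = Q00 I J * b I J + Q10 (I-1) J * b (I-1) J + Q01 I (J-1) * b I (J-1)
      + Q11 (I-1) (J-1) * b (I-1) (J-1)" for I J
  have K0: "0 \<le> K" by (simp add: K_def)
  have nm1: "int (n - 1) = int n - 1" using n1 by simp
  have bz: "b I J = 0" if "I < 0 \<or> int n \<le> I \<or> J < 0 \<or> int n \<le> J" for I J
    unfolding b_def using that nm1 by (intro Bnum_zero) auto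
  define phi where "phi k l I J = c n (k - I) * c n (l - J)" for k l I J :: int
  have H: "(\<Sum>I\<in>{0..K}. \<Sum>J\<in>{0..K}. (int n * Bnum n I J - R I J) * (c n (k-I) * c n (l-J))) = 0"
    if k: "0 \<le> k" and l: "0 \<le> l" for k l
  proof -
    define M where "M = 2*k*l + k + l"
    have M0: "0 \<le> M" using k l by (simp add: M_def)
    have "(\<Sum>I\<in>{0..K}. \<Sum>J\<in>{0..K}. int n * Bnum n I J * (c n (k-I) * c n (l-J))) = int n * Fs n K k l"
      unfolding Fs_def by (simp add: sum_distrib_left algebra_simps)
    also have "\<dots> = int n * c n M" using Fs_eval[of n K k l] k l by (simp add: K_def M_def)
    also have "\<dots> = (M + int n) * c (n-1) M" using c_F2[OF n1 M0] by simp
    also have "\<dots> = (M + int n) * Fs (n-1) K k l" using Fs_eval[of "n-1" K k l] k l nm1 by (simp add: K_def M_def)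
    also have "\<dots> = (\<Sum>i\<in>{0..K}. \<Sum>j\<in>{0..K}. b i j * ((M + int n) * (c (n-1) (k-i) * c (n-1) (l-j))))"
      unfolding Fs_def b_def by (simp add: sum_distrib_left algebra_simps)
    also have "\<dots> = (\<Sum>i\<in>{0..K}. \<Sum>j\<in>{0..K}.
           b i j * Q00 i j * phi k l i j
         + b i j * Q10 i j * phi k l (i+1) j
         + b i j * Q01 i j * phi k l i (j+1)
         + b i j * Q11 i j * phi k l (i+1) (j+1))"
    proof (intro sum.cong refl)
      fix i j
      show "b i j * ((M + int n) * (c (n-1) (k-i) * c (n-1) (l-j))) =
           b i j * Q00 i j * phi k l i j
         + b i j * Q10 i j * phi k l (i+1) j
         + b i j * Q01 i j * phi k l i (j+1)
         + b i j * Q11 i j * phi k l (i+1) (j+1)"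
        (is "?L = ?R")
      proof -
        have "?L = b i j * ((2*k*l + k + l + int n) * (c (n-1) (k - i) * c (n-1) (l - j)))"
          by (simp add: M_def)
        also have "\<dots> = b i j * ((2*i*j + i + j + int n) * (c n (k - i) * c n (l - j))
   + ((2*j+1) * int n - (2*i*j + i + j + int n)) * (c n (k - i - 1) * c n (l - j))
   + ((2*i+1) * int n - (2*i*j + i + j + int n)) * (c n (k - i) * c n (l - j - 1))
   + (2 * int n * int n - (2*j+1) * int n - (2*i+1) * int n + (2*i*j + i + j + int n)) * (c n (k - i - 1) * c n (l - j - 1)))"
          by (simp only: pointwise[OF n1])
        also have "\<dots> = ?R"
          unfolding phi_def Q00_def Q10_def Q01_def Q11_def by (simp add: algebra_simps)
        finally show ?thesis .
      qed
    qed
    also have "\<dots> = (\<Sum>i\<in>{0..K}. \<Sum>j\<in>{0..K}. b i j * Q00 i j * phi k l i j)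
         + (\<Sum>i\<in>{0..K}. \<Sum>j\<in>{0..K}. (b i j * Q10 i j) * phi k l (i+1) j)
         + (\<Sum>i\<in>{0..K}. \<Sum>j\<in>{0..K}. (b i j * Q01 i j) * phi k l i (j+1))
         + (\<Sum>i\<in>{0..K}. \<Sum>j\<in>{0..K}. (b i j * Q11 i j) * phi k l (i+1) (j+1))"
      by (simp add: sum.distrib)
    also have "(\<Sum>i\<in>{0..K}. \<Sum>j\<in>{0..K}. (b i j * Q10 i j) * phi k l (i+1) j)
       = (\<Sum>i\<in>{0..K}. \<Sum>j\<in>{0..K}. (b (i-1) j * Q10 (i-1) j) * phi k l i j)"
      by (rule shift_outer[where g = "\<lambda>i j. b i j * Q10 i j" and phi = "phi k l"]) (auto simp: bz K_def)
    also have "(\<Sum>i\<in>{0..K}. \<Sum>j\<in>{0..K}. (b i j * Q01 i j) * phi k l i (j+1))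
       = (\<Sum>i\<in>{0..K}. \<Sum>j\<in>{0..K}. (b i (j-1) * Q01 i (j-1)) * phi k l i j)"
      by (rule shift_inner[where g = "\<lambda>i j. b i j * Q01 i j" and phi = "phi k l"]) (auto simp: bz K_def)
    also have "(\<Sum>i\<in>{0..K}. \<Sum>j\<in>{0..K}. (b i j * Q11 i j) * phi k l (i+1) (j+1))
       = (\<Sum>i\<in>{0..K}. \<Sum>j\<in>{0..K}. (b i (j-1) * Q11 i (j-1)) * phi k l (i+1) j)"
      by (rule shift_inner[where g = "\<lambda>i j. b i j * Q11 i j" and phi = "\<lambda>i j. phi k l (i+1) j"]) (auto simp: bz K_def)
    also have "(\<Sum>i\<in>{0..K}. \<Sum>j\<in>{0..K}. (b i (j-1) * Q11 i (j-1)) * phi k l (i+1) j)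
       = (\<Sum>i\<in>{0..K}. \<Sum>j\<in>{0..K}. (b (i-1) (j-1) * Q11 (i-1) (j-1)) * phi k l i j)"
      by (rule shift_outer[where g = "\<lambda>i j. b i (j-1) * Q11 i (j-1)" and phi = "phi k l"]) (auto simp: bz K_def)
    also have "(\<Sum>i\<in>{0..K}. \<Sum>j\<in>{0..K}. b i j * Q00 i j * phi k l i j)
         + (\<Sum>i\<in>{0..K}. \<Sum>j\<in>{0..K}. (b (i-1) j * Q10 (i-1) j) * phi k l i j)
         + (\<Sum>i\<in>{0..K}. \<Sum>j\<in>{0..K}. (b i (j-1) * Q01 i (j-1)) * phi k l i j)
         + (\<Sum>i\<in>{0..K}. \<Sum>j\<in>{0..K}. (b (i-1) (j-1) * Q11 (i-1) (j-1)) * phi k l i j)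
       = (\<Sum>i\<in>{0..K}. \<Sum>j\<in>{0..K}. R i j * phi k l i j)"
      unfolding R_def by (simp add: sum.distrib algebra_simps)
    finally have "(\<Sum>I\<in>{0..K}. \<Sum>J\<in>{0..K}. int n * Bnum n I J * (c n (k-I) * c n (l-J)))
        = (\<Sum>i\<in>{0..K}. \<Sum>j\<in>{0..K}. R i j * (c n (k-i) * c n (l-j)))"
      unfolding phi_def .
    then show ?thesis by (simp add: sum_subtractf left_diff_distrib)
  qed
  have D0: "int n * Bnum n I J - R I J = 0" if "0 \<le> I" "I \<le> K" "0 \<le> J" "J \<le> K" for I J
    by (rule uniq[where cf = "c n" and K = K and D = "\<lambda>I J. int n * Bnum n I J - R I J"])
       (use c_neg c_zero H that in auto)
  show ?thesis
  proof (cases "0 \<le> i \<and> i \<le> K \<and> 0 \<le> j \<and> j \<le> K")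
    case True
    then have "int n * Bnum n i j = R i j" using D0 by auto
    then show ?thesis unfolding R_def b_def Q00_def Q10_def Q01_def Q11_def by (simp add: algebra_simps)
  next
    case False
    then have "i < 0 \<or> int n < i \<or> j < 0 \<or> int n < j" by (auto simp: K_def)
    then have z: "Bnum n i j = 0" "b i j = 0" "b (i-1) j = 0" "b i (j-1) = 0" "b (i-1) (j-1) = 0"
      using Bnum_zero[of i n j] bz False by (auto simp: K_def)
    then show ?thesis unfolding b_def by simp
  qed
qed


theorem lemma3p7:
  fixes n :: nat and i j :: int
  assumes "n \<ge> 1"
  shows "int n * Bnum n i j =
      (int n + i + j + 2*i*j) * Bnum (n - 1) i j
    + (1 - i + (2 * int n + 1) * j - 2*i*j) * Bnum (n - 1) (i - 1) j
    + (1 - j + (2 * int n + 1) * i - 2*i*j) * Bnum (n - 1) i (j - 1)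
    + (int n * (2 * int n + 3) - (2 * int n + 1) * i - (2 * int n + 1) * j + 2*i*j)
        * Bnum (n - 1) (i - 1) (j - 1)"
  by (rule main[OF assms])

end
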